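(* Let $W$ be an irreducible Coxeter group with generators $s_1,\dots,s_n$ and relations $s_i^2=e$, $(s_is_j)^{m_{ij}}=e$ ($m_{ij}\in\{2,3,\dots\}\cup\{\infty\}$). The following are equivalent: (a) $W$ is finite; (b) there exists an admissible E-GCM graph whose associated Coxeter group is $W$; (c) every E-GCM graph whose associated Coxeter group is $W$ is admissible.
   Context: An E-GCM is a real $n\times n$ matrix $M=(M_{ij})$ with $M_{ii}=2$, $M_{ij}\le 0$ ($i\ne j$), $M_{ij}\ne0\iff M_{ji}\ne0$, and nonzero $M_{ij}M_{ji}$ either $\ge 4$ or $=4\cos^2(\pi/m)$ for an integer $m\ge3$. Its E-GCM graph $(\Gamma,M)$ has nodes $\gamma_i$, adjacent iff $M_{ij}\ne0$. Its associated Coxeter group $W(\Gamma,M)$ has generators $s_i$ and relations $s_i^2=e$, $(s_is_j)^{m_{ij}}=e$ with $m_{ij}=k$ if $M_{ij}M_{ji}=4\cos^2(\pi/k)$ ($k\ge2$ integer) and $m_{ij}=\infty$ if $M_{ij}M_{ji}\ge 4$; "associated Coxeter group is $W$" means these $m_{ij}$ coincide with those of $W$ (after identifying nodes with generators). $W$ irreducible means the graph on $\{1,\dots,n\}$ with $i\sim j$ iff $m_{ij}\ge3$ is connected (equivalently $\Gamma$ is connected). Numbers game: positions $\lambda\in\mathbb{R}^n$; firing $\gamma_i$ (allowed iff $\lambda_i>0$) replaces each $\lambda_j$ by $\lambda_j-M_{ij}\lambda_i$; a game repeatedly fires nodes with positive population while any exist; a game sequence is convergent if finite. A connected E-GCM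 graph is admissible if some nonzero position with all $\lambda_i\ge0$ has a convergent game sequence. *)

theory Defs
  imports Complex_Main "HOL-Library.Extended_Nat"
begin

definition coxeter_matrix :: "nat \<Rightarrow> (nat \<Rightarrow> nat \<Rightarrow> enat) \<Rightarrow> bool" where
  "coxeter_matrix n m \<longleftrightarrow>
     (\<forall>i<n. \<forall>j<n. i \<noteq> j \<longrightarrow> m i j = m j i \<and> m i j \<ge> 2)"

definition cox_adj :: "nat \<Rightarrow> (nat \<Rightarrow> nat \<Rightarrow> enat) \<Rightarrow> nat \<Rightarrow> nat \<Rightarrow> bool" where
  "cox_adj n m i j \<longleftrightarrow> i < n \<and> j < n \<and> i \<noteq> j \<and> m i j \<ge> 3"

definition coxeter_irreducible :: "nat \<Rightarrow> (nat \<Rightarrow> nat \<Rightarrow> enat) \<Rightarrow> bool" where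
  "coxeter_irreducible n m \<longleftrightarrow> n \<ge> 1 \<and> (\<forall>i<n. \<forall>j<n. (cox_adj n m)\<^sup>*\<^sup>* i j)"

text \<open>Since all generators are involutions, words without inverses suffice.\<close>

definition relators :: "nat \<Rightarrow> (nat \<Rightarrow> nat \<Rightarrow> enat) \<Rightarrow> nat list set" where
  "relators n m = {[i, i] | i. i < n} \<union>
     {concat (replicate k [i, j]) | i j k. i < n \<and> j < n \<and> i \<noteq> j \<and> m i j = enat k}"

definition cox_step :: "nat \<Rightarrow> (nat \<Rightarrow> nat \<Rightarrow> enat) \<Rightarrow> (nat list \<times> nat list) set" where
  "cox_step n m = {(u @ r @ v, u @ v) | u r v.
      r \<in> relators n m \<and> set u \<subseteq> {..<n} \<and> set v \<subseteq> {..<n}}"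

definition cox_rel :: "nat \<Rightarrow> (nat \<Rightarrow> nat \<Rightarrow> enat) \<Rightarrow> (nat list \<times> nat list) set" where
  "cox_rel n m = (cox_step n m \<union> (cox_step n m)\<inverse>)\<^sup>*"

definition coxeter_group :: "nat \<Rightarrow> (nat \<Rightarrow> nat \<Rightarrow> enat) \<Rightarrow> nat list set set" where
  "coxeter_group n m = lists {..<n} // cox_rel n m"

definition egcm :: "nat \<Rightarrow> (nat \<Rightarrow> nat \<Rightarrow> real) \<Rightarrow> bool" where
  "egcm n M \<longleftrightarrow>
     (\<forall>i<n. M i i = 2) \<and>
     (\<forall>i<n. \<forall>j<n. i \<noteq> j \<longrightarrow>
        M i j \<le> 0 \<and> (M i j \<noteq> 0 \<longleftrightarrow> M j i \<noteq> 0) \<and>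
        (M i j * M j i \<noteq> 0 \<longrightarrow>
           M i j * M j i \<ge> 4 \<or> (\<exists>k::nat. k \<ge> 3 \<and> M i j * M j i = 4 * (cos (pi / k))\<^sup>2)))"

definition egcm_assoc :: "nat \<Rightarrow> (nat \<Rightarrow> nat \<Rightarrow> real) \<Rightarrow> (nat \<Rightarrow> nat \<Rightarrow> enat) \<Rightarrow> bool" where
  "egcm_assoc n M m \<longleftrightarrow>
     (\<forall>i<n. \<forall>j<n. i \<noteq> j \<longrightarrow>
        (m i j = \<infinity> \<longleftrightarrow> M i j * M j i \<ge> 4) \<and>
        (\<forall>k::nat. m i j = enat k \<longrightarrow> k \<ge> 2 \<and> M i j * M j i = 4 * (cos (pi / k))\<^sup>2))"

definition egcm_adj :: "nat \<Rightarrow> (nat \<Rightarrow> nat \<Rightarrow> real) \<Rightarrow> nat \<Rightarrow> nat \<Rightarrow> bool" where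
  "egcm_adj n M i j \<longleftrightarrow> i < n \<and> j < n \<and> i \<noteq> j \<and> M i j \<noteq> 0"

definition egcm_connected :: "nat \<Rightarrow> (nat \<Rightarrow> nat \<Rightarrow> real) \<Rightarrow> bool" where
  "egcm_connected n M \<longleftrightarrow> n \<ge> 1 \<and> (\<forall>i<n. \<forall>j<n. (egcm_adj n M)\<^sup>*\<^sup>* i j)"

text \<open>Numbers game. Positions are functions nat \<Rightarrow> real (only indices < n matter).\<close>

definition fire :: "(nat \<Rightarrow> nat \<Rightarrow> real) \<Rightarrow> nat \<Rightarrow> (nat \<Rightarrow> real) \<Rightarrow> (nat \<Rightarrow> real)" where
  "fire M i lam = (\<lambda>j. lam j - M i j * lam i)"

fun legal_play :: "nat \<Rightarrow> (nat \<Rightarrow> nat \<Rightarrow> real) \<Rightarrow> (nat \<Rightarrow> real) \<Rightarrow> nat list \<Rightarrow> bool" where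
  "legal_play n M lam [] = True"
| "legal_play n M lam (i # is) = (i < n \<and> lam i > 0 \<and> legal_play n M (fire M i lam) is)"

fun play :: "(nat \<Rightarrow> nat \<Rightarrow> real) \<Rightarrow> (nat \<Rightarrow> real) \<Rightarrow> nat list \<Rightarrow> (nat \<Rightarrow> real)" where
  "play M lam [] = lam"
| "play M lam (i # is) = play M (fire M i lam) is"

definition convergent_game :: "nat \<Rightarrow> (nat \<Rightarrow> nat \<Rightarrow> real) \<Rightarrow> (nat \<Rightarrow> real) \<Rightarrow> nat list \<Rightarrow> bool" where
  "convergent_game n M lam is \<longleftrightarrow>
     legal_play n M lam is \<and> (\<forall>i<n. play M lam is i \<le> 0)"

definition admissible :: "nat \<Rightarrow> (nat \<Rightarrow> nat \<Rightarrow> real) \<Rightarrow> bool" where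
  "admissible n M \<longleftrightarrow> egcm_connected n M \<and>
     (\<exists>lam. (\<forall>i<n. lam i \<ge> 0) \<and> (\<exists>i<n. lam i \<noteq> 0) \<and> (\<exists>is. convergent_game n M lam is))"

end

theory Submission
  imports Defs "HOL-Computational_Algebra.Polynomial" "HOL-Library.FuncSet"
begin

definition Pn :: "nat \<Rightarrow> (nat \<Rightarrow> real) set" where
  "Pn n = {v. \<forall>l\<ge>n. v l = 0}"

definition F :: "nat \<Rightarrow> (nat \<Rightarrow> nat \<Rightarrow> real) \<Rightarrow> nat \<Rightarrow> (nat \<Rightarrow> real) \<Rightarrow> (nat \<Rightarrow> real)" where
  "F n M i v = (\<lambda>l. if l < n then v l - M i l * v i else 0)"

fun pl :: "nat \<Rightarrow> (nat \<Rightarrow> nat \<Rightarrow> real) \<Rightarrow> nat list \<Rightarrow> (nat \<Rightarrow> real) \<Rightarrow> (nat \<Rightarrow> real)" where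
  "pl n M [] v = v"
| "pl n M (i # w) v = pl n M w (F n M i v)"

fun lg :: "nat \<Rightarrow> (nat \<Rightarrow> nat \<Rightarrow> real) \<Rightarrow> nat list \<Rightarrow> (nat \<Rightarrow> real) \<Rightarrow> bool" where
  "lg n M [] v = True"
| "lg n M (i # w) v = (i < n \<and> v i > 0 \<and> lg n M w (F n M i v))"

definition neg :: "(nat \<Rightarrow> real) \<Rightarrow> (nat \<Rightarrow> real)" where
  "neg v = (\<lambda>l. - v l)"

definition Rs :: "nat \<Rightarrow> (nat \<Rightarrow> real) \<Rightarrow> (nat \<Rightarrow> real)" where
  "Rs n v = (\<lambda>l. if l < n then v l else 0)"

lemma F_Pn[simp]: "F n M i v \<in> Pn n"
  by (simp add: F_def Pn_def)

lemma pl_Pn: "v \<in> Pn n \<Longrightarrow> pl n M w v \<in> Pn n"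
  by (induction w arbitrary: v) auto

lemma pl_append: "pl n M (u @ w) v = pl n M w (pl n M u v)"
  by (induction u arbitrary: v) auto

lemma lg_append: "lg n M (u @ w) v = (lg n M u v \<and> lg n M w (pl n M u v))"
  by (induction u arbitrary: v) auto

lemma lg_set: "lg n M w v \<Longrightarrow> set w \<subseteq> {..<n}"
  by (induction w arbitrary: v) auto

lemma neg_Pn[simp]: "v \<in> Pn n \<Longrightarrow> neg v \<in> Pn n"
  by (simp add: neg_def Pn_def)

lemma neg_neg[simp]: "neg (neg v) = v"
  by (simp add: neg_def)

lemma Rs_Pn[simp]: "Rs n v \<in> Pn n"
  by (simp add: Rs_def Pn_def)

locale egc =
  fixes n :: nat and M :: "nat \<Rightarrow> nat \<Rightarrow> real" and m :: "nat \<Rightarrow> nat \<Rightarrow> enat"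
  assumes egcm: "egcm n M" and assoc: "egcm_assoc n M m" and cm: "coxeter_matrix n m"
begin

lemma Mii: "i < n \<Longrightarrow> M i i = 2"
  using egcm by (simp add: egcm_def)

lemma F_F: "i < n \<Longrightarrow> v \<in> Pn n \<Longrightarrow> F n M i (F n M i v) = v"
  by (auto simp: F_def Pn_def Mii fun_eq_iff algebra_simps)

lemma F_neg: "F n M i (neg v) = neg (F n M i v)"
  by (auto simp: F_def neg_def fun_eq_iff algebra_simps)

lemma F_i: "i < n \<Longrightarrow> F n M i v i = - v i"
  by (simp add: F_def Mii)

lemma pl_neg: "pl n M w (neg v) = neg (pl n M w v)"
  by (induction w arbitrary: v) (auto simp: F_neg)

lemma rev_play:
  assumes "lg n M q v" "v \<in> Pn n"
  shows "lg n M (rev q) (neg (pl n M q v)) \<and> pl n M (rev q) (neg (pl n M q v)) = neg v"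
  using assms
proof (induction q arbitrary: v)
  case Nil
  then show ?case by simp
next
  case (Cons i q)
  have i: "i < n" "v i > 0" "lg n M q (F n M i v)" using Cons.prems by auto
  from Cons.IH[OF i(3)] have IH:
    "lg n M (rev q) (neg (pl n M q (F n M i v)))"
    "pl n M (rev q) (neg (pl n M q (F n M i v))) = neg (F n M i v)" by auto
  have "lg n M [i] (neg (F n M i v))" using i by (simp add: neg_def F_i)
  moreover have "pl n M [i] (neg (F n M i v)) = neg v"
    using i Cons.prems by (simp add: F_neg F_F)
  ultimately show ?case using IH by (simp add: lg_append pl_append)
qed

end

lemma concat_rep_comm: "concat (replicate t xs) @ xs = xs @ concat (replicate t xs)"
  by (induction t) auto

fun alt :: "nat \<Rightarrow> nat \<Rightarrow> nat \<Rightarrow> nat list" where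
  "alt i j 0 = []"
| "alt i j (Suc k) = i # alt j i k"

lemma alt_set: "set (alt i j k) \<subseteq> {i, j}"
  by (induction k arbitrary: i j) auto

lemma alt_SS: "alt i j (Suc (Suc k)) = i # j # alt i j k"
  by simp

lemma alt_even: "alt i j (2 * t) = concat (replicate t [i, j])"
  by (induction t) (auto simp: concat_rep_comm)

lemma alt_odd: "alt i j (2 * t + 1) = concat (replicate t [i, j]) @ [i]"
proof (induction t)
  case 0 then show ?case by simp
next
  case (Suc t)
  have "alt i j (2 * Suc t + 1) = i # j # alt i j (2 * t + 1)"
    by (simp add: numeral_2_eq_2)
  also have "\<dots> = [i, j] @ concat (replicate t [i, j]) @ [i]" using Suc by simp
  also have "\<dots> = concat (replicate (Suc t) [i, j]) @ [i]"
    by (simp add: concat_rep_comm)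
  finally show ?case .
qed

lemma rev_concat_rep: "rev (concat (replicate t [j, i])) = concat (replicate t [i, j])"
  by (induction t) (auto simp: concat_rep_comm)

lemma alt_rev_alt: "alt i j k @ rev (alt j i k) = concat (replicate k [i, j])"
proof (cases "even k")
  case True
  then obtain t where k: "k = 2 * t" by auto
  have "concat (replicate (2*t) [i,j]) = concat (replicate t [i,j]) @ concat (replicate t [i,j])"
    by (simp add: mult_2 replicate_add)
  then show ?thesis using k by (simp add: alt_even rev_concat_rep)
next
  case False
  then obtain t where k: "k = 2 * t + 1" using oddE by blast
  have "concat (replicate (2*t+1) [i,j]) = concat (replicate t [i,j]) @ [i, j] @ concat (replicate t [i,j])"
    by (simp add: mult_2 replicate_add concat_rep_comm)
  moreover have "alt i j k = concat (replicate t [i, j]) @ [i]" "alt j i k = concat (replicate t [j, i]) @ [j]"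
    using k alt_odd by auto
  ultimately show ?thesis using k by (simp add: rev_concat_rep)
qed

context egc
begin

abbreviation CR where "CR \<equiv> cox_rel n m"

lemma msym: "i < n \<Longrightarrow> j < n \<Longrightarrow> i \<noteq> j \<Longrightarrow> m i j = m j i"
  using cm by (simp add: coxeter_matrix_def)

lemma m_ge2: "i < n \<Longrightarrow> j < n \<Longrightarrow> i \<noteq> j \<Longrightarrow> m i j \<ge> 2"
  using cm by (simp add: coxeter_matrix_def)

lemma relators_set: "r \<in> relators n m \<Longrightarrow> set r \<subseteq> {..<n}"
  by (auto simp: relators_def split: if_splits)

lemma CR_refl[simp]: "(w, w) \<in> CR"
  by (simp add: cox_rel_def)

lemma CR_sym: "(w, w') \<in> CR \<Longrightarrow> (w', w) \<in> CR"
proof -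
  have "sym (cox_step n m \<union> (cox_step n m)\<inverse>)" by (auto simp: sym_def)
  then have "sym CR" unfolding cox_rel_def by (rule sym_rtrancl)
  then show "(w, w') \<in> CR \<Longrightarrow> (w', w) \<in> CR" by (auto simp: sym_def)
qed

lemma CR_trans: "(u, v) \<in> CR \<Longrightarrow> (v, w) \<in> CR \<Longrightarrow> (u, w) \<in> CR"
  unfolding cox_rel_def by (rule rtrancl_trans)

lemma CR_rel: "r \<in> relators n m \<Longrightarrow> set u \<subseteq> {..<n} \<Longrightarrow> set v \<subseteq> {..<n} \<Longrightarrow> (u @ r @ v, u @ v) \<in> CR"
  unfolding cox_rel_def cox_step_def by blast

lemma CR_cong_step: 
  assumes "(w, w') \<in> cox_step n m \<union> (cox_step n m)\<inverse>" "set x \<subseteq> {..<n}" "set y \<subseteq> {..<n}"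
  shows "(x @ w @ y, x @ w' @ y) \<in> cox_step n m \<union> (cox_step n m)\<inverse>"
proof -
  from assms(1) obtain u r v where
    "r \<in> relators n m" "set u \<subseteq> {..<n}" "set v \<subseteq> {..<n}"
    "(w = u @ r @ v \<and> w' = u @ v) \<or> (w' = u @ r @ v \<and> w = u @ v)"
    unfolding cox_step_def by blast
  then have "(x @ u @ r @ v @ y, x @ u @ v @ y) \<in> cox_step n m"
    using assms(2,3) unfolding cox_step_def
    by (intro CollectI exI[of _ "x @ u"] exI[of _ r] exI[of _ "v @ y"]) auto
  then show ?thesis using \<open>(w = u @ r @ v \<and> w' = u @ v) \<or> (w' = u @ r @ v \<and> w = u @ v)\<close> by auto
qed

lemma CR_cong: "(w, w') \<in> CR \<Longrightarrow> set x \<subseteq> {..<n} \<Longrightarrow> set y \<subseteq> {..<n} \<Longrightarrow> (x @ w @ y, x @ w' @ y) \<in> CR"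
  unfolding cox_rel_def
proof (induction rule: rtrancl_induct)
  case base then show ?case by simp
next
  case (step v w)
  then show ?case using CR_cong_step[of v w x y] by (meson rtrancl.rtrancl_into_rtrancl)
qed

lemma CR_consL: "(w, w') \<in> CR \<Longrightarrow> i < n \<Longrightarrow> (i # w, i # w') \<in> CR"
  using CR_cong[of w w' "[i]" "[]"] by simp

lemma CR_appR: "(w, w') \<in> CR \<Longrightarrow> set y \<subseteq> {..<n} \<Longrightarrow> (w @ y, w' @ y) \<in> CR"
  using CR_cong[of w w' "[]" y] by simp

lemma rev_relator: "r \<in> relators n m \<Longrightarrow> rev r \<in> relators n m"
proof -
  assume "r \<in> relators n m"
  then consider (a) i where "r = [i, i]" "i < n"
    | (b) i j k where "r = concat (replicate k [i, j])" "i < n" "j < n" "i \<noteq> j" "m i j = enat k"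
    unfolding relators_def by blast
  then show ?thesis
  proof cases
    case a then show ?thesis by (auto simp: relators_def)
  next
    case (b i j k)
    have "rev r = concat (replicate k [j, i])"
      using rev_concat_rep[of k i j] b by simp
    moreover have "m j i = enat k" using b msym by simp
    ultimately show ?thesis using b unfolding relators_def by blast
  qed
qed

lemma CR_rev_step: "(w, w') \<in> cox_step n m \<Longrightarrow> (rev w, rev w') \<in> cox_step n m"
  unfolding cox_step_def
proof clarify
  fix u r v assume h: "r \<in> relators n m" "set u \<subseteq> {..<n}" "set v \<subseteq> {..<n}"
  show "\<exists>u' r' v'. (rev (u @ r @ v), rev (u @ v)) = (u' @ r' @ v', u' @ v') \<and>
            r' \<in> relators n m \<and> set u' \<subseteq> {..<n} \<and> set v' \<subseteq> {..<n}"
    by (rule exI[of _ "rev v"], rule exI[of _ "rev r"], rule exI[of _ "rev u"])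
       (use h rev_relator in auto)
qed

lemma CR_rev: "(w, w') \<in> CR \<Longrightarrow> (rev w, rev w') \<in> CR"
  unfolding cox_rel_def
proof (induction rule: rtrancl_induct)
  case base then show ?case by simp
next
  case (step v w)
  then have "(rev v, rev w) \<in> cox_step n m \<union> (cox_step n m)\<inverse>" using CR_rev_step by blast
  then show ?case using step by (meson rtrancl.rtrancl_into_rtrancl)
qed

lemma CR_cancel: "i < n \<Longrightarrow> set x \<subseteq> {..<n} \<Longrightarrow> set y \<subseteq> {..<n} \<Longrightarrow> (x @ [i, i] @ y, x @ y) \<in> CR"
  by (rule CR_rel) (auto simp: relators_def)

lemma CR_rev_cancel: "set y \<subseteq> {..<n} \<Longrightarrow> (rev y @ y, []) \<in> CR"
proof (induction y)
  case Nil then show ?case by simp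
next
  case (Cons a y)
  have "(rev y @ [a, a] @ y, rev y @ y) \<in> CR" using Cons.prems by (intro CR_cancel) auto
  then show ?case using Cons by (auto intro: CR_trans)
qed

lemma braid_word:
  assumes "i < n" "j < n" "i \<noteq> j" "m i j = enat k"
  shows "(alt i j k, alt j i k) \<in> CR"
proof -
  let ?x = "alt i j k" and ?y = "alt j i k"
  have sx: "set ?x \<subseteq> {..<n}" and sy: "set ?y \<subseteq> {..<n}"
    using alt_set[of i j k] alt_set[of j i k] assms by auto
  have r: "?x @ rev ?y \<in> relators n m"
    using assms unfolding alt_rev_alt relators_def by blast
  have "(?x @ (rev ?y @ ?y), ?x @ []) \<in> CR"
    using CR_cong[OF CR_rev_cancel[OF sy], of ?x "[]"] sx by simp
  then have "(?x, ?x @ rev ?y @ ?y) \<in> CR" by (simp add: CR_sym)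
  moreover have "((?x @ rev ?y) @ ?y, [] @ ?y) \<in> CR"
    using CR_rel[OF r, of "[]" ?y] sy by simp
  ultimately show ?thesis by (auto intro: CR_trans)
qed

end

lemma cheb:
  fixes y :: "nat \<Rightarrow> real"
  assumes rec: "\<And>s. y (Suc (Suc s)) = 2 * cos th * y (Suc s) - y s"
  shows "y s * sin th = y 1 * sin (real s * th) - y 0 * sin ((real s - 1) * th)"
proof (induction s rule: nat_less_induct)
  case (1 s)
  show ?case
  proof (cases s)
    case 0 then show ?thesis by (simp add: sin_minus)
  next
    case (Suc s1)
    show ?thesis
    proof (cases s1)
      case 0 then show ?thesis using Suc by simp
    next
      case (Suc s2)
      have IH1: "y (Suc s2) * sin th = y 1 * sin (real (Suc s2) * th) - y 0 * sin ((real (Suc s2) - 1) * th)"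
        using 1 Suc \<open>s = Suc s1\<close> by auto
      have IH2: "y s2 * sin th = y 1 * sin (real s2 * th) - y 0 * sin ((real s2 - 1) * th)"
        using 1 Suc \<open>s = Suc s1\<close> by auto
      have trig: "\<And>x. sin (x + th) = 2 * cos th * sin x - sin (x - th)"
        by (simp add: sin_add sin_diff algebra_simps)
      define x where "x = real s2 * th"
      have a1: "real (Suc s2) * th = x + th" "(real (Suc s2) - 1) * th = x" "(real s2 - 1) * th = x - th"
        "real s * th = x + th + th" "(real s - 1) * th = x + th"
        using Suc \<open>s = Suc s1\<close> by (auto simp: x_def algebra_simps)
      have IH1': "y (Suc s2) * sin th = y 1 * sin (x + th) - y 0 * sin x" using IH1 a1 by simp
      have IH2': "y s2 * sin th = y 1 * sin x - y 0 * sin (x - th)" using IH2 a1 x_def by simp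
      have ys: "y s = 2 * cos th * y (Suc s2) - y s2" using rec[of s2] Suc \<open>s = Suc s1\<close> by simp
      have st: "\<And>Y2 Y1 Y0 sn C y1 y0 A2 A1 A0 Am :: real. Y2 = 2*C*Y1 - Y0 \<Longrightarrow> Y1*sn = y1*A1 - y0*A0 \<Longrightarrow>
          Y0*sn = y1*A0 - y0*Am \<Longrightarrow> A2 = 2*C*A1 - A0 \<Longrightarrow> A1 = 2*C*A0 - Am \<Longrightarrow> Y2*sn = y1*A2 - y0*A1"
        by algebra
      have "y s * sin th = y 1 * sin (x + th + th) - y 0 * sin (x + th)"
      proof (rule st[OF ys IH1' IH2' _ trig[of x]])
        show "sin (x + th + th) = 2 * cos th * sin (x + th) - sin x" using trig[of "x + th"] by simp
      qed
      then show ?thesis using a1 by simp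
    qed
  qed
qed

definition Tm :: "real \<Rightarrow> real \<Rightarrow> real \<times> real \<Rightarrow> real \<times> real" where
  "Tm a b = (\<lambda>(p, q). ((a * b - 1) * p - b * q, a * p - q))"

lemma Tm_CH: "Tm a b (Tm a b w) = (fst (Tm a b w) * (a*b - 2) - fst w, snd (Tm a b w) * (a*b-2) - snd w)"
  by (cases w) (simp add: Tm_def algebra_simps)

lemma Tm_pow_period:
  assumes k: "k \<ge> 3" and c: "a * b = 4 * (cos (pi / k))\<^sup>2"
  shows "(Tm a b ^^ k) w = w"
proof -
  define th where "th = 2 * pi / k"
  have cth: "a * b - 2 = 2 * cos th"
    using c cos_double_cos[of "pi / k"] by (simp add: th_def)
  have thpos: "0 < th" "th < pi" using k by (auto simp: th_def field_simps)
  have sth: "sin th \<noteq> 0" using sin_gt_zero[OF thpos] by simp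
  have kth: "real k * th = 2 * pi" using k by (simp add: th_def)
  have kth1: "(real k - 1) * th = 2 * pi - th" using kth by (simp add: algebra_simps)
  have gen: "\<And>f. (\<forall>s. f ((Tm a b ^^ Suc (Suc s)) w) = 2 * cos th * f ((Tm a b ^^ Suc s) w) - f ((Tm a b ^^ s) w))
      \<Longrightarrow> f ((Tm a b ^^ k) w) = f w"
  proof -
    fix f :: "real \<times> real \<Rightarrow> real"
    assume r: "\<forall>s. f ((Tm a b ^^ Suc (Suc s)) w) = 2 * cos th * f ((Tm a b ^^ Suc s) w) - f ((Tm a b ^^ s) w)"
    have "f ((Tm a b ^^ k) w) * sin th = f ((Tm a b ^^ 1) w) * sin (real k * th) - f ((Tm a b ^^ 0) w) * sin ((real k - 1) * th)"
      using cheb[of "\<lambda>s. f ((Tm a b ^^ s) w)" th k] r by simp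
    also have "\<dots> = f w * sin th" unfolding kth kth1 by (simp add: sin_diff)
    finally show "f ((Tm a b ^^ k) w) = f w" using sth by simp
  qed
  have "fst ((Tm a b ^^ k) w) = fst w"
    by (rule gen) (auto simp: Tm_CH cth algebra_simps)
  moreover have "snd ((Tm a b ^^ k) w) = snd w"
    by (rule gen) (auto simp: Tm_CH cth algebra_simps)
  ultimately show ?thesis by (simp add: prod_eq_iff)
qed

lemma Tm_sum_zero:
  assumes per: "(Tm a b ^^ k) w = w" and c4: "a * b \<noteq> 4"
  shows "(\<Sum>s<k. fst ((Tm a b ^^ s) w)) = 0 \<and> (\<Sum>s<k. snd ((Tm a b ^^ s) w)) = 0"
proof -
  define P where "P = (\<Sum>s<k. fst ((Tm a b ^^ s) w))"
  define Q where "Q = (\<Sum>s<k. snd ((Tm a b ^^ s) w))"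
  have shift: "\<And>f::real\<times>real\<Rightarrow>real. (\<Sum>s<k. f ((Tm a b ^^ Suc s) w)) = (\<Sum>s<k. f ((Tm a b ^^ s) w))"
  proof -
    fix f :: "real\<times>real\<Rightarrow>real"
    have "(\<Sum>s<Suc k. f ((Tm a b ^^ s) w)) = f w + (\<Sum>s<k. f ((Tm a b ^^ Suc s) w))"
      by (simp only: sum.lessThan_Suc_shift) simp
    moreover have "(\<Sum>s<Suc k. f ((Tm a b ^^ s) w)) = (\<Sum>s<k. f ((Tm a b ^^ s) w)) + f w"
      using per by simp
    ultimately show "(\<Sum>s<k. f ((Tm a b ^^ Suc s) w)) = (\<Sum>s<k. f ((Tm a b ^^ s) w))" by simp
  qed
  have fT: "\<And>v. fst (Tm a b v) = (a*b-1) * fst v - b * snd v" "\<And>v. snd (Tm a b v) = a * fst v - snd v"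
    by (auto simp: Tm_def split: prod.splits)
  have e1: "P = (a*b-1) * P - b * Q"
  proof -
    have "P = (\<Sum>s<k. fst ((Tm a b ^^ Suc s) w))" using shift[of fst] by (simp add: P_def)
    also have "\<dots> = (\<Sum>s<k. (a*b-1) * fst ((Tm a b ^^ s) w) - b * snd ((Tm a b ^^ s) w))"
      by (simp add: fT)
    also have "\<dots> = (a*b-1) * P - b * Q"
      by (simp add: P_def Q_def sum_subtractf sum_distrib_left)
    finally show ?thesis .
  qed
  have e2: "Q = a * P - Q"
  proof -
    have "Q = (\<Sum>s<k. snd ((Tm a b ^^ Suc s) w))" using shift[of snd] by (simp add: Q_def)
    also have "\<dots> = (\<Sum>s<k. a * fst ((Tm a b ^^ s) w) - snd ((Tm a b ^^ s) w))"
      by (simp add: fT)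
    also have "\<dots> = a * P - Q"
      by (simp add: P_def Q_def sum_subtractf sum_distrib_left)
    finally show ?thesis .
  qed
  from e2 have q: "Q = a * P / 2" by simp
  with e1 have "(a*b - 4) * P = 0" by (simp add: algebra_simps)
  with c4 have "P = 0" by simp
  with q show ?thesis by (simp add: P_def Q_def)
qed

lemma cos_nonneg_k: "k \<ge> 2 \<Longrightarrow> cos (pi / real k) \<ge> 0"
proof -
  assume k: "k \<ge> 2"
  have "pi / real k \<le> pi / 2" by (rule divide_left_mono) (use k in auto)
  moreover have "0 \<le> pi / real k" by simp
  moreover have "-(pi/2) \<le> pi / real k" using \<open>0 \<le> pi / real k\<close> pi_gt_zero by linarith
  ultimately show ?thesis by (intro cos_ge_zero) auto
qed

lemma cos_lt1_k: "k \<ge> 2 \<Longrightarrow> cos (pi / real k) < 1"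
proof -
  assume k: "k \<ge> 2"
  have "pi / real k \<le> pi / 1" by (rule divide_left_mono) (use k in auto)
  moreover have "0 < pi / real k" using k by simp
  ultimately have "cos (pi / real k) < cos 0" by (intro cos_monotone_0_pi) auto
  then show ?thesis by simp
qed

context egc
begin

lemma fin_facts:
  assumes "i < n" "j < n" "i \<noteq> j" "m i j = enat k"
  shows "k \<ge> 2 \<and> M i j * M j i = 4 * (cos (pi / k))\<^sup>2"
  using assoc assms unfolding egcm_assoc_def by blast

lemma inf_facts:
  assumes "i < n" "j < n" "i \<noteq> j" "m i j = \<infinity>"
  shows "M i j * M j i \<ge> 4"
  using assoc assms unfolding egcm_assoc_def by blast

lemma M_offdiag: "i < n \<Longrightarrow> j < n \<Longrightarrow> i \<noteq> j \<Longrightarrow> M i j \<le> 0 \<and> (M i j \<noteq> 0 \<longleftrightarrow> M j i \<noteq> 0)"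
  using egcm unfolding egcm_def by blast

lemma prod_lt4:
  assumes "i < n" "j < n" "i \<noteq> j" "m i j = enat k"
  shows "M i j * M j i < 4"
proof -
  from fin_facts[OF assms] have k: "k \<ge> 2" and c: "M i j * M j i = 4 * (cos (pi / k))\<^sup>2" by auto
  have "(cos (pi / k))\<^sup>2 < 1" using cos_nonneg_k[OF k] cos_lt1_k[OF k]
    by (simp add: abs_square_less_1)
  then show ?thesis using c by simp
qed

lemma two_case:
  assumes "i < n" "j < n" "i \<noteq> j" "m i j = enat 2"
  shows "M i j = 0 \<and> M j i = 0"
proof -
  from fin_facts[OF assms] have "M i j * M j i = 0" by simp
  then show ?thesis using M_offdiag[OF assms(1-3)] by auto
qed

lemma tau:
  assumes "v \<in> Pn n" "i < n" "j < n" "i \<noteq> j"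
  shows "F n M j (F n M i v) = (\<lambda>l. if l < n then v l - (M i l * v i + M j l * (v j - M i j * v i)) else 0)"
    and "pl n M [i, j] v i = fst (Tm (M i j) (M j i) (v i, v j))"
    and "pl n M [i, j] v j = snd (Tm (M i j) (M j i) (v i, v j))"
  using assms by (auto simp: F_def Mii Tm_def fun_eq_iff algebra_simps)

lemma dihedral_iter:
  assumes "v \<in> Pn n" "i < n" "j < n" "i \<noteq> j"
  shows "pl n M (concat (replicate t [i, j])) v =
    (\<lambda>l. if l < n then v l - (\<Sum>s<t. M i l * fst ((Tm (M i j) (M j i) ^^ s) (v i, v j))
          + M j l * (snd ((Tm (M i j) (M j i) ^^ s) (v i, v j)) - M i j * fst ((Tm (M i j) (M j i) ^^ s) (v i, v j)))) else 0)"
  using assms(1)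
proof (induction t arbitrary: v)
  case 0
  then show ?case by (auto simp: Pn_def fun_eq_iff)
next
  case (Suc t)
  let ?T = "Tm (M i j) (M j i)"
  define v' where "v' = pl n M [i, j] v"
  have v'P: "v' \<in> Pn n" using pl_Pn[OF Suc.prems] by (simp add: v'_def)
  have w': "(v' i, v' j) = ?T (v i, v j)"
    using tau(2,3)[OF Suc.prems assms(2-4)] by (simp add: v'_def prod_eq_iff)
  have "pl n M (concat (replicate (Suc t) [i, j])) v = pl n M (concat (replicate t [i, j])) v'"
    by (simp add: v'_def)
  also have "\<dots> = (\<lambda>l. if l < n then v' l - (\<Sum>s<t. M i l * fst ((?T ^^ s) (v' i, v' j))
          + M j l * (snd ((?T ^^ s) (v' i, v' j)) - M i j * fst ((?T ^^ s) (v' i, v' j)))) else 0)"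
    by (rule Suc.IH[OF v'P])
  also have "\<dots> = (\<lambda>l. if l < n then v l - (\<Sum>s<Suc t. M i l * fst ((?T ^^ s) (v i, v j))
          + M j l * (snd ((?T ^^ s) (v i, v j)) - M i j * fst ((?T ^^ s) (v i, v j)))) else 0)"
    unfolding w' sum.lessThan_Suc_shift
    by (auto simp: fun_eq_iff v'_def tau(1)[OF Suc.prems assms(2-4)] funpow_swap1[symmetric] algebra_simps)
  finally show ?case .
qed

lemma dihedral_rel:
  assumes "v \<in> Pn n" "i < n" "j < n" "i \<noteq> j" "m i j = enat k"
  shows "pl n M (concat (replicate k [i, j])) v = v"
proof -
  let ?T = "Tm (M i j) (M j i)"
  let ?w = "(v i, v j)"
  from fin_facts[OF assms(2-5)] have k: "k \<ge> 2" and c: "M i j * M j i = 4 * (cos (pi / k))\<^sup>2" by auto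
  have per: "(?T ^^ k) ?w = ?w"
  proof (cases "k = 2")
    case True
    then have "M i j = 0" "M j i = 0" using two_case assms by auto
    then show ?thesis using True by (simp add: Tm_def numeral_2_eq_2)
  next
    case False
    then show ?thesis using Tm_pow_period[OF _ c] k by simp
  qed
  have c4: "M i j * M j i \<noteq> 4" using prod_lt4[OF assms(2-5)] by simp
  from Tm_sum_zero[OF per c4] have z: "(\<Sum>s<k. fst ((?T ^^ s) ?w)) = 0" "(\<Sum>s<k. snd ((?T ^^ s) ?w)) = 0" by auto
  have "\<And>l. (\<Sum>s<k. M i l * fst ((?T ^^ s) ?w) + M j l * (snd ((?T ^^ s) ?w) - M i j * fst ((?T ^^ s) ?w))) = 0"
    using z by (simp add: sum.distrib sum_subtractf sum_distrib_left[symmetric] algebra_simps)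
  then show ?thesis using dihedral_iter[OF assms(1-4), of k] assms(1) by (auto simp: fun_eq_iff Pn_def)
qed

lemma relator_id: "r \<in> relators n m \<Longrightarrow> v \<in> Pn n \<Longrightarrow> pl n M r v = v"
  unfolding relators_def using F_F dihedral_rel by auto

lemma CR_pl: "(w, w') \<in> CR \<Longrightarrow> v \<in> Pn n \<Longrightarrow> pl n M w v = pl n M w' v"
  unfolding cox_rel_def
proof (induction rule: rtrancl_induct)
  case base then show ?case by simp
next
  case (step x y)
  have "pl n M x v = pl n M y v" using step(2) step.prems
    by (auto simp: cox_step_def pl_append relator_id pl_Pn)
  then show ?case using step by simp
qed

lemma braid_pl:
  assumes "v \<in> Pn n" "i < n" "j < n" "i \<noteq> j" "m i j = enat k"
  shows "pl n M (alt i j k) v = pl n M (alt j i k) v"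
  using CR_pl[OF braid_word[OF assms(2-5)] assms(1)] .

end

fun altok :: "real \<Rightarrow> real \<Rightarrow> nat \<Rightarrow> real \<Rightarrow> real \<Rightarrow> bool" where
  "altok a b 0 u v = True"
| "altok a b (Suc k) u v = (u > 0 \<and> altok b a k (v - a * u) (- u))"

lemma altok_inf:
  "a < 0 \<Longrightarrow> b < 0 \<Longrightarrow> a * b \<ge> 4 \<Longrightarrow> u > 0 \<Longrightarrow> u * sqrt (-a) + v * sqrt (-b) \<ge> 0 \<Longrightarrow> altok a b k u v"
proof (induction k arbitrary: a b u v)
  case 0 then show ?case by simp
next
  case (Suc k)
  define sA where "sA = sqrt (-a)"
  define sB where "sB = sqrt (-b)"
  have sA: "sA > 0" "sA * sA = -a" using Suc.prems by (auto simp: sA_def)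
  have sB: "sB > 0" "sB * sB = -b" using Suc.prems by (auto simp: sB_def)
  have "(sA * sB) * (sA * sB) = a * b" using sA sB by (simp add: algebra_simps)
  then have p2: "sA * sB \<ge> 2"
  proof -
    assume sq: "(sA * sB) * (sA * sB) = a * b"
    have xp: "sA * sB > 0" using sA sB by simp
    show ?thesis
    proof (rule ccontr)
      assume "\<not> sA * sB \<ge> 2"
      then have "(sA * sB) * (sA * sB) < 2 * 2" using xp by (intro mult_strict_mono) auto
      then show False using sq Suc.prems(3) by linarith
    qed
  qed
  have h: "v * sB \<ge> - u * sA" using Suc.prems(5) by (simp add: sA_def sB_def)
  have aa: "a = - (sA * sA)" using sA by simp
  have "(v - a * u) * sB = v * sB + u * sA * (sA * sB)" unfolding aa by (simp add: algebra_simps)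
  also have "\<dots> \<ge> - u * sA + u * sA * 2"
  proof -
    have "u * sA \<ge> 0" using Suc.prems(4) sA by simp
    then have "u * sA * (sA * sB) \<ge> u * sA * 2" using p2 by (intro mult_left_mono) auto
    then show ?thesis using h by linarith
  qed
  finally have k1: "(v - a * u) * sB \<ge> u * sA" by (simp add: mult.commute)
  have up: "v - a * u > 0"
  proof -
    have "u * sA > 0" using Suc.prems(4) sA by simp
    then have "(v - a * u) * sB > 0" using k1 by simp
    then show ?thesis using sB zero_less_mult_pos2 by blast
  qed
  have "(v - a * u) * sqrt (-b) + (- u) * sqrt (-a) \<ge> 0" using k1 by (simp add: sA_def sB_def)
  then have "altok b a k (v - a * u) (- u)"
    using Suc.IH[of b a "v - a * u" "-u"] Suc.prems up by (simp add: mult.commute)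
  then show ?case using Suc.prems by simp
qed

lemma altok_fin_gen:
  fixes g :: "real \<Rightarrow> real" and t :: real
  assumes grec: "\<And>t. g (t + 1) = 2 * cos ph * g t - g (t - 1)"
  shows "a < 0 \<Longrightarrow> b < 0 \<Longrightarrow> sqrt (-a) * sqrt (-b) = 2 * cos ph \<Longrightarrow> u = sqrt (-b) * g t \<Longrightarrow>
     v = - sqrt (-a) * g (t - 1) \<Longrightarrow> (\<forall>s::nat. s < r \<longrightarrow> g (t + real s) > 0) \<Longrightarrow> altok a b r u v"
proof (induction r arbitrary: a b u v t)
  case 0 then show ?case by simp
next
  case (Suc r)
  have g0: "g t > 0" using Suc.prems(6)[rule_format, of 0] by simp
  have sb: "sqrt (-b) > 0" using Suc.prems by simp
  have up: "u > 0" using Suc.prems(4) g0 sb by simp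
  have sa2: "sqrt (-a) * sqrt (-a) = -a" using Suc.prems by simp
  have e: "v - a * u = sqrt (-a) * g (t + 1)"
  proof -
    have q: "sqrt (-a) * sqrt (-a) * sqrt (-b) * g t = sqrt (-a) * ((sqrt (-a) * sqrt (-b)) * g t)"
      by (simp only: mult.assoc)
    then have q2: "sqrt (-a) * sqrt (-a) * sqrt (-b) * g t = sqrt (-a) * (2 * cos ph * g t)"
      unfolding Suc.prems(3) .
    have q3: "- a * u = sqrt (-a) * sqrt (-a) * sqrt (-b) * g t"
      using sa2 Suc.prems(4) by simp
    have "v - a * u = - sqrt (-a) * g (t - 1) + sqrt (-a) * (2 * cos ph * g t)"
      using Suc.prems(5) q3 q2 by simp
    also have "\<dots> = sqrt (-a) * (2 * cos ph * g t - g (t - 1))" by (simp add: algebra_simps)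
    finally show ?thesis using grec by simp
  qed
  have "altok b a r (v - a * u) (- u)"
  proof (rule Suc.IH[of b a "v - a * u" "t + 1" "-u"])
    show "b < 0" "a < 0" using Suc.prems by auto
    show "sqrt (- b) * sqrt (- a) = 2 * cos ph" using Suc.prems(3) by (simp add: mult.commute)
    show "v - a * u = sqrt (- a) * g (t + 1)" by (rule e)
    show "- u = - sqrt (- b) * g (t + 1 - 1)" using Suc.prems(4) by simp
    show "\<forall>s. s < r \<longrightarrow> 0 < g (t + 1 + real s)"
    proof (intro allI impI)
      fix s assume "s < r"
      then have "0 < g (t + real (Suc s))" using Suc.prems(6) by blast
      then show "0 < g (t + 1 + real s)" by (simp add: add.assoc)
    qed
  qed
  then show ?case using up by simp
qed

lemma altok_fin:
  assumes k: "k \<ge> 3" and ab: "a < 0" "b < 0" "a * b = 4 * (cos (pi / k))\<^sup>2" and uv: "u > 0" "v > 0"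
  shows "altok a b k u v"
proof -
  define ph where "ph = pi / k"
  have php: "0 < ph" "ph < pi" using k by (auto simp: ph_def field_simps)
  have sph: "sin ph > 0" using sin_gt_zero[OF php] .
  have cph: "cos ph \<ge> 0" using cos_nonneg_k[of k] k by (simp add: ph_def)
  define P where "P = u / (sqrt (-b) * sin ph)"
  define Q where "Q = v / (sqrt (-a) * sin ph)"
  have Pp: "P > 0" and Qp: "Q > 0" using uv ab sph by (auto simp: P_def Q_def)
  define g where "g t = P * sin ((t + 1) * ph) + Q * sin (t * ph)" for t
  have trig: "\<And>x. sin (x + ph) = 2 * cos ph * sin x - sin (x - ph)"
    by (simp add: sin_add sin_diff algebra_simps)
  have grec: "\<And>t. g (t + 1) = 2 * cos ph * g t - g (t - 1)"
  proof -
    fix t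
    define x where "x = t * ph"
    have ar: "(t + 1 + 1) * ph = x + ph + ph" "(t + 1) * ph = x + ph" "(t - 1 + 1) * ph = x"
       "(t - 1) * ph = x - ph"
      by (auto simp: x_def algebra_simps)
    have e1: "sin (x + ph + ph) = 2 * cos ph * sin (x + ph) - sin x"
      using trig[of "x + ph"] by simp
    have e2: "sin (x + ph) = 2 * cos ph * sin x - sin (x - ph)"
      using trig[of x] by simp
    have "g (t + 1) = P * sin (x + ph + ph) + Q * sin (x + ph)" unfolding g_def using ar by simp
    also have "\<dots> = P * (2 * cos ph * sin (x + ph) - sin x) + Q * (2 * cos ph * sin x - sin (x - ph))"
      unfolding e1 e2 ..
    also have "\<dots> = 2 * cos ph * (P * sin (x + ph) + Q * sin x) - (P * sin x + Q * sin (x - ph))"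
      by (simp add: algebra_simps)
    also have "\<dots> = 2 * cos ph * g t - g (t - 1)" unfolding g_def using ar x_def by simp
    finally show "g (t + 1) = 2 * cos ph * g t - g (t - 1)" .
  qed
  have sq: "sqrt (-a) * sqrt (-b) = 2 * cos ph"
  proof -
    have "sqrt (-a) * sqrt (-b) = sqrt (a * b)" by (simp add: real_sqrt_mult[symmetric])
    also have "\<dots> = sqrt ((2 * cos ph)\<^sup>2)" using ab(3) by (simp add: ph_def power_mult_distrib)
    also have "\<dots> = 2 * cos ph" using cph by (subst real_sqrt_abs) simp
    finally show ?thesis .
  qed
  have u: "u = sqrt (-b) * g 0" using sph ab by (simp add: g_def P_def)
  have v: "v = - sqrt (-a) * g (0 - 1)" using sph ab by (simp add: g_def Q_def sin_minus)
  have pos: "\<forall>s::nat. s < k \<longrightarrow> g (0 + real s) > 0"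
  proof (intro allI impI)
    fix s :: nat assume s: "s < k"
    have kp: "real k > 0" using k by simp
    have a1: "0 < (real s + 1) * ph" using php by simp
    have "(real s + 1) * pi \<le> real k * pi" using s by (intro mult_right_mono) auto
    then have a2: "(real s + 1) * ph \<le> pi" using kp by (simp add: ph_def field_simps)
    have a3: "0 \<le> real s * ph" using php by simp
    have a4: "real s * ph < pi" using s kp by (simp add: ph_def field_simps)
    have s1: "sin ((real s + 1) * ph) \<ge> 0" using sin_ge_zero a1 a2 by simp
    have s2: "sin (real s * ph) \<ge> 0" using sin_ge_zero a3 a4 by simp
    show "g (0 + real s) > 0"
    proof (cases "s + 1 < k")
      case True
      have "(real s + 1) * pi < real k * pi" using True by (intro mult_strict_right_mono) auto
      then have "(real s + 1) * ph < pi" using kp by (simp add: ph_def field_simps)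
      then have "sin ((real s + 1) * ph) > 0" using sin_gt_zero a1 by simp
      then show ?thesis using Pp Qp s2 by (simp add: g_def add_pos_nonneg)
    next
      case False
      then have "s \<ge> 1" using k s by simp
      then have "0 < real s * ph" using php by simp
      then have "sin (real s * ph) > 0" using sin_gt_zero a4 by simp
      then show ?thesis using Pp Qp s1 by (simp add: g_def add_nonneg_pos)
    qed
  qed
  show ?thesis by (rule altok_fin_gen[OF grec ab(1,2) sq u v pos])
qed

lemma neg_neg_of_prod_pos: "(a::real) \<le> 0 \<Longrightarrow> b \<le> 0 \<Longrightarrow> a * b > 0 \<Longrightarrow> a < 0 \<and> b < 0"
  by (cases "a = 0"; cases "b = 0") auto

context egc
begin

lemma lg_alt: "i < n \<Longrightarrow> j < n \<Longrightarrow> i \<noteq> j \<Longrightarrow> lg n M (alt i j k) v = altok (M i j) (M j i) k (v i) (v j)"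
proof (induction k arbitrary: i j v)
  case 0 then show ?case by simp
next
  case (Suc k)
  have "F n M i v j = v j - M i j * v i" "F n M i v i = - v i"
    using Suc.prems by (auto simp: F_def Mii)
  then show ?case using Suc.IH[of j i "F n M i v"] Suc.prems by auto
qed

lemma DL_inf:
  assumes "i < n" "j < n" "i \<noteq> j" "m i j = \<infinity>" "v i > 0" "v j > 0"
  shows "lg n M (alt i j t) v"
proof -
  have p: "M i j * M j i \<ge> 4" using inf_facts assms by blast
  have "M i j \<le> 0" "M j i \<le> 0" using M_offdiag assms by auto
  then have "M i j < 0" "M j i < 0" using p neg_neg_of_prod_pos[of "M i j" "M j i"] by auto
  then show ?thesis unfolding lg_alt[OF assms(1-3)]
    by (intro altok_inf) (use p assms in \<open>auto intro: add_pos_pos\<close>)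
qed

lemma DL_fin:
  assumes "i < n" "j < n" "i \<noteq> j" "m i j = enat k" "v i > 0" "v j > 0"
  shows "lg n M (alt i j k) v"
proof -
  from fin_facts[OF assms(1-4)] have k: "k \<ge> 2" and c: "M i j * M j i = 4 * (cos (pi / k))\<^sup>2" by auto
  show ?thesis
  proof (cases "k = 2")
    case True
    then have "M i j = 0" "M j i = 0" using two_case assms by auto
    then show ?thesis unfolding lg_alt[OF assms(1-3)] using True assms by (simp add: numeral_2_eq_2)
  next
    case False
    then have k3: "k \<ge> 3" using k by simp
    have "cos (pi / k) > 0"
    proof -
      have "pi / real k < pi / 2" by (rule divide_strict_left_mono) (use k3 in auto)
      moreover have "0 < pi / real k" using k3 by simp
      ultimately show ?thesis by (intro cos_gt_zero) auto
    qed
    then have cp: "M i j * M j i > 0" using c by simp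
    have "M i j \<le> 0" "M j i \<le> 0" using M_offdiag assms by auto
    then have "M i j < 0" "M j i < 0" using cp neg_neg_of_prod_pos[of "M i j" "M j i"] by auto
    then show ?thesis unfolding lg_alt[OF assms(1-3)] using altok_fin[OF k3 _ _ c] assms by auto
  qed
qed

end

lemma length_alt[simp]: "length (alt i j k) = k"
  by (induction k arbitrary: i j) auto

context egc
begin

lemma SC:
  "\<forall>v g. v \<in> Pn n \<longrightarrow> lg n M g v \<longrightarrow> (\<forall>l<n. pl n M g v l \<le> 0) \<longrightarrow> length g = N \<longrightarrow>
     (\<forall>p. lg n M p v \<longrightarrow> length p \<le> N \<and>
        (\<exists>r. lg n M (p @ r) v \<and> length (p @ r) = N \<and> pl n M (p @ r) v = pl n M g v \<and> (p @ r, g) \<in> CR))"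
proof (induction N)
  case 0
  show ?case
  proof (intro allI impI)
    fix v g p
    assume v: "v \<in> Pn n" and g: "lg n M g v" "\<forall>l<n. pl n M g v l \<le> 0" "length g = 0" and p: "lg n M p v"
    have "g = []" using g by simp
    have "p = []"
    proof (cases p)
      case (Cons i p')
      then have "i < n" "v i > 0" using p by auto
      then show ?thesis using g(2) \<open>g = []\<close> by force
    qed simp
    then show "length p \<le> 0 \<and> (\<exists>r. lg n M (p @ r) v \<and> length (p @ r) = 0 \<and> pl n M (p @ r) v = pl n M g v \<and> (p @ r, g) \<in> CR)"
      using \<open>g = []\<close> by simp
  qed
next
  case (Suc N)
  show ?case
  proof (intro allI impI)
    fix v g p
    assume v: "v \<in> Pn n" and g: "lg n M g v" "\<forall>l<n. pl n M g v l \<le> 0" "length g = Suc N" and p: "lg n M p v"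
    obtain i g' where gi: "g = i # g'" using g(3) by (cases g) auto
    have i: "i < n" "v i > 0" "lg n M g' (F n M i v)" using g(1) gi by auto
    have g'len: "length g' = N" using g(3) gi by simp
    have g'fin: "\<forall>l<n. pl n M g' (F n M i v) l \<le> 0" using g(2) gi by simp
    have IHi: "\<And>p. lg n M p (F n M i v) \<Longrightarrow> length p \<le> N \<and>
        (\<exists>r. lg n M (p @ r) (F n M i v) \<and> length (p @ r) = N \<and> pl n M (p @ r) (F n M i v) = pl n M g' (F n M i v) \<and> (p @ r, g') \<in> CR)"
      using Suc.IH i(3) g'len g'fin F_Pn[of n M i v] by blast
    have gset: "set g \<subseteq> {..<n}" using lg_set g(1) by blast
    show "length p \<le> Suc N \<and> (\<exists>r. lg n M (p @ r) v \<and> length (p @ r) = Suc N \<and> pl n M (p @ r) v = pl n M g v \<and> (p @ r, g) \<in> CR)"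
    proof (cases p)
      case Nil
      then show ?thesis using g by (intro conjI exI[of _ g]) auto
    next
      case (Cons j p')
      have j: "j < n" "v j > 0" "lg n M p' (F n M j v)" using p Cons by auto
      show ?thesis
      proof (cases "j = i")
        case True
        from IHi[of p'] j(3) True obtain r where r: "length p' \<le> N" "lg n M (p' @ r) (F n M i v)"
          "length (p' @ r) = N" "pl n M (p' @ r) (F n M i v) = pl n M g' (F n M i v)" "(p' @ r, g') \<in> CR"
          by blast
        have "(i # (p' @ r), i # g') \<in> CR" using CR_consL[OF r(5) i(1)] .
        then show ?thesis using r True Cons gi i by (intro conjI exI[of _ r]) auto
      next
        case False
        note ji = False
        show ?thesis
        proof (cases "m i j")
          case infinity
          have "lg n M (alt i j (Suc (Suc N))) v" using DL_inf[OF i(1) j(1) ji[symmetric] infinity i(2) j(2)] .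
          then have "lg n M (alt j i (Suc N)) (F n M i v)" by simp
          from IHi[OF this] show ?thesis by simp
        next
          case (enat k)
          have k2: "k \<ge> 2" using fin_facts[OF i(1) j(1) ji[symmetric] enat] by simp
          define K where "K = k - 1"
          have kK: "k = Suc K" using k2 by (simp add: K_def)
          have mji: "m j i = enat k" using msym[OF i(1) j(1)] ji enat by simp
          have lij: "lg n M (alt i j k) v" using DL_fin[OF i(1) j(1) ji[symmetric] enat i(2) j(2)] .
          have lji: "lg n M (alt j i k) v" using DL_fin[OF j(1) i(1) ji mji j(2) i(2)] .
          have l1: "lg n M (alt j i K) (F n M i v)" using lij kK by simp
          from IHi[OF l1] obtain r where r: "lg n M (alt j i K @ r) (F n M i v)" "length (alt j i K @ r) = N"
            "pl n M (alt j i K @ r) (F n M i v) = pl n M g' (F n M i v)" "(alt j i K @ r, g') \<in> CR"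
            by blast
          have br: "pl n M (alt i j k) v = pl n M (alt j i k) v"
            using braid_pl[OF v i(1) j(1) ji[symmetric] enat] .
          have same: "pl n M (alt i j K) (F n M j v) = pl n M (alt j i K) (F n M i v)"
            using br kK by simp
          define h where "h = alt i j K @ r"
          have lh: "lg n M h (F n M j v)"
            using lji kK r(1) same by (simp add: h_def lg_append)
          have ph: "pl n M h (F n M j v) = pl n M g v"
            using r(3) same gi by (simp add: h_def pl_append)
          have hlen: "length h = N" using r(2) by (simp add: h_def)
          have hfin: "\<forall>l<n. pl n M h (F n M j v) l \<le> 0" using ph g(2) by simp
          have IHj: "\<And>p. lg n M p (F n M j v) \<Longrightarrow> length p \<le> N \<and>
              (\<exists>r. lg n M (p @ r) (F n M j v) \<and> length (p @ r) = N \<and> pl n M (p @ r) (F n M j v) = pl n M h (F n M j v) \<and> (p @ r, h) \<in> CR)"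
            using Suc.IH lh hlen hfin F_Pn[of n M j v] by blast
          from IHj[OF j(3)] obtain r' where r': "length p' \<le> N" "lg n M (p' @ r') (F n M j v)"
            "length (p' @ r') = N" "pl n M (p' @ r') (F n M j v) = pl n M h (F n M j v)" "(p' @ r', h) \<in> CR"
            by blast
          have rset: "set r \<subseteq> {..<n}" using lg_set[OF r(1)] by auto
          have c1: "(j # (p' @ r'), j # h) \<in> CR" using CR_consL[OF r'(5) j(1)] .
          have c2: "(alt j i k @ r, alt i j k @ r) \<in> CR"
            using CR_appR[OF CR_sym[OF braid_word[OF i(1) j(1) ji[symmetric] enat]] rset] .
          have c3: "(i # (alt j i K @ r), i # g') \<in> CR" using CR_consL[OF r(4) i(1)] .
          have "j # h = alt j i k @ r" using kK by (simp add: h_def)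
          moreover have "alt i j k @ r = i # (alt j i K @ r)" using kK by simp
          ultimately have "(j # (p' @ r'), g) \<in> CR" using c1 c2 c3 gi by (metis CR_trans)
          then show ?thesis using r' Cons ph j by (intro conjI exI[of _ r']) auto
        qed
      qed
    qed
  qed
qed

lemma SC':
  assumes "v \<in> Pn n" "lg n M g v" "\<forall>l<n. pl n M g v l \<le> 0" "lg n M p v"
  shows "length p \<le> length g \<and>
        (\<exists>r. lg n M (p @ r) v \<and> length (p @ r) = length g \<and> pl n M (p @ r) v = pl n M g v \<and> (p @ r, g) \<in> CR)"
  using SC[of "length g"] assms by blast

end

definition ip :: "nat \<Rightarrow> (nat \<Rightarrow> real) \<Rightarrow> (nat \<Rightarrow> real) \<Rightarrow> real" where
  "ip n x y = (\<Sum>l<n. x l * y l)"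

context egc
begin

definition Gset where "Gset = (\<lambda>w. restrict (pl n M w) (Pn n)) ` lists {..<n}"
definition Orb where "Orb v = (\<lambda>w. pl n M w v) ` lists {..<n}"
definition alpha where "alpha i = (\<lambda>l. if l < n then M i l else 0)"
definition lc where "lc a x b y = (\<lambda>l::nat. a * x l + b * (y l :: real))"

lemma lc_Pn[simp]: "x \<in> Pn n \<Longrightarrow> y \<in> Pn n \<Longrightarrow> lc a x b y \<in> Pn n"
  by (simp add: lc_def Pn_def)

lemma alpha_Pn[simp]: "alpha i \<in> Pn n"
  by (simp add: alpha_def Pn_def)

lemma F_lc: "x \<in> Pn n \<Longrightarrow> y \<in> Pn n \<Longrightarrow> F n M i (lc a x b y) = lc a (F n M i x) b (F n M i y)"
  by (auto simp: F_def lc_def fun_eq_iff algebra_simps)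

lemma pl_lc: "x \<in> Pn n \<Longrightarrow> y \<in> Pn n \<Longrightarrow> pl n M w (lc a x b y) = lc a (pl n M w x) b (pl n M w y)"
proof (induction w arbitrary: x y)
  case Nil then show ?case by simp
next
  case (Cons i w)
  then show ?case by (simp add: F_lc)
qed

lemma F_alpha: "x \<in> Pn n \<Longrightarrow> F n M i x = lc 1 x (- x i) (alpha i)"
  by (auto simp: F_def lc_def alpha_def fun_eq_iff Pn_def)

lemma F_alpha_self: "i < n \<Longrightarrow> F n M i (alpha i) = lc 0 (alpha i) (-1) (alpha i)"
  by (auto simp: F_def lc_def alpha_def fun_eq_iff Mii)

lemma Gset_elem: "g \<in> Gset \<Longrightarrow> \<exists>w\<in>lists {..<n}. g = restrict (pl n M w) (Pn n)"
  by (auto simp: Gset_def)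

lemma Gset_lc: "g \<in> Gset \<Longrightarrow> x \<in> Pn n \<Longrightarrow> y \<in> Pn n \<Longrightarrow> g (lc a x b y) = lc a (g x) b (g y)"
  using Gset_elem pl_lc by fastforce

lemma Orb_Gset: "v \<in> Pn n \<Longrightarrow> Orb v = (\<lambda>g. g v) ` Gset"
  by (auto simp: Orb_def Gset_def image_image)

lemma Gset_finite_Orb: "finite Gset \<Longrightarrow> v \<in> Pn n \<Longrightarrow> finite (Orb v)"
  by (simp add: Orb_Gset)

lemma id_Gset: "restrict id (Pn n) \<in> Gset"
  unfolding Gset_def by (rule image_eqI[of _ _ "[]"]) (auto simp: restrict_def fun_eq_iff)

definition Bf where "Bf x y = (\<Sum>g\<in>Gset. ip n (g x) (g y))"

lemma ip_lc: "ip n (lc a x b y) z = a * ip n x z + b * ip n y z"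
  by (simp add: ip_def lc_def sum.distrib sum_distrib_left algebra_simps)

lemma ip_sym: "ip n x y = ip n y x"
  by (simp add: ip_def mult.commute)

lemma Bf_sym: "Bf x y = Bf y x"
  by (simp add: Bf_def ip_sym)

lemma Bf_lc: "x \<in> Pn n \<Longrightarrow> y \<in> Pn n \<Longrightarrow> Bf (lc a x b y) z = a * Bf x z + b * Bf y z"
  by (simp add: Bf_def Gset_lc ip_lc sum.distrib sum_distrib_left)

lemma Bf_inv:
  assumes i: "i < n" and x: "x \<in> Pn n" and y: "y \<in> Pn n"
  shows "Bf (F n M i x) (F n M i y) = Bf x y"
proof -
  define phi where "phi g = restrict (\<lambda>v. g (F n M i v)) (Pn n)" for g :: "(nat \<Rightarrow> real) \<Rightarrow> (nat \<Rightarrow> real)"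
  have phiG: "phi g \<in> Gset" if "g \<in> Gset" for g
  proof -
    from Gset_elem[OF that] obtain w where w: "w \<in> lists {..<n}" "g = restrict (pl n M w) (Pn n)" by blast
    have "phi g = restrict (pl n M (i # w)) (Pn n)" using w by (auto simp: phi_def restrict_def fun_eq_iff)
    moreover have "i # w \<in> lists {..<n}" using w i by simp
    ultimately show ?thesis unfolding Gset_def by blast
  qed
  have phiphi: "phi (phi g) = g" if "g \<in> Gset" for g
  proof -
    from Gset_elem[OF that] obtain w where w: "g = restrict (pl n M w) (Pn n)" by blast
    show ?thesis using w by (auto simp: phi_def restrict_def fun_eq_iff F_F[OF i])
  qed
  have "Bf x y = (\<Sum>g\<in>Gset. ip n (phi g x) (phi g y))"
    unfolding Bf_def
    by (rule sum.reindex_bij_witness[of _ phi phi]) (auto simp: phiG phiphi)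
  also have "\<dots> = Bf (F n M i x) (F n M i y)"
    unfolding Bf_def using x y by (simp add: phi_def)
  finally show ?thesis by simp
qed

lemma Bf_alpha:
  assumes i: "i < n" and x: "x \<in> Pn n"
  shows "2 * Bf x (alpha i) = x i * Bf (alpha i) (alpha i)"
proof -
  have "Bf x (alpha i) = Bf (F n M i x) (F n M i (alpha i))" using Bf_inv[OF i x alpha_Pn] by simp
  also have "\<dots> = Bf (lc 1 x (- x i) (alpha i)) (lc 0 (alpha i) (-1) (alpha i))"
    by (simp add: F_alpha[OF x] F_alpha_self[OF i])
  also have "\<dots> = Bf x (lc 0 (alpha i) (-1) (alpha i)) - x i * Bf (alpha i) (lc 0 (alpha i) (-1) (alpha i))"
    using x by (simp add: Bf_lc)
  also have "\<dots> = - Bf x (alpha i) + x i * Bf (alpha i) (alpha i)"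
  proof -
    have e1: "Bf x (lc 0 (alpha i) (-1) (alpha i)) = - Bf x (alpha i)"
      using Bf_sym[of x "lc 0 (alpha i) (-1) (alpha i)"] Bf_lc[OF alpha_Pn alpha_Pn, of 0 i "-1" i x]
        Bf_sym[of x "alpha i"] by simp
    have e2: "Bf (alpha i) (lc 0 (alpha i) (-1) (alpha i)) = - Bf (alpha i) (alpha i)"
      using Bf_sym[of "alpha i" "lc 0 (alpha i) (-1) (alpha i)"] Bf_lc[OF alpha_Pn alpha_Pn, of 0 i "-1" i "alpha i"]
      by simp
    show ?thesis unfolding e1 e2 by simp
  qed
  finally show ?thesis by simp
qed

lemma Bf_alpha_pos:
  assumes i: "i < n" and fin: "finite Gset"
  shows "Bf (alpha i) (alpha i) > 0"
proof -
  have nn: "\<And>g. ip n (g (alpha i)) (g (alpha i)) \<ge> 0" by (simp add: ip_def sum_nonneg)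
  have "ip n (alpha i) (alpha i) \<ge> alpha i i * alpha i i"
    unfolding ip_def using i by (intro member_le_sum) auto
  then have "ip n (alpha i) (alpha i) > 0" using i by (simp add: alpha_def Mii)
  then have "ip n (restrict id (Pn n) (alpha i)) (restrict id (Pn n) (alpha i)) > 0" by simp
  moreover have "ip n (restrict id (Pn n) (alpha i)) (restrict id (Pn n) (alpha i)) \<le> Bf (alpha i) (alpha i)"
    unfolding Bf_def by (rule member_le_sum[OF id_Gset]) (simp_all add: nn fin)
  ultimately show ?thesis by linarith
qed

definition rho where "rho = (\<lambda>l. if l < n then 1 else (0::real))"

lemma rho_Pn[simp]: "rho \<in> Pn n" by (simp add: rho_def Pn_def)

lemma pot_dec:
  assumes fin: "finite Gset" and i: "i < n" and x: "x \<in> Pn n" and xi: "x i > 0"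
  shows "Bf (F n M i x) rho < Bf x rho"
proof -
  have "Bf (F n M i x) rho = Bf x rho - x i * Bf (alpha i) rho"
    using x by (simp add: F_alpha Bf_lc)
  moreover have "2 * Bf rho (alpha i) = Bf (alpha i) (alpha i)" using Bf_alpha[OF i rho_Pn] i by (simp add: rho_def)
  moreover have "Bf (alpha i) (alpha i) > 0" using Bf_alpha_pos[OF i fin] .
  moreover have "Bf (alpha i) rho = Bf rho (alpha i)" by (rule Bf_sym)
  ultimately show ?thesis using xi by simp
qed

lemma bounded_plays:
  assumes fin: "finite Gset" and v: "v \<in> Pn n" and p: "lg n M p v"
  shows "length p < card (Orb v)"
proof -
  define pos where "pos t = pl n M (take t p) v" for t
  have step: "Bf (pos (Suc t)) rho < Bf (pos t) rho" if t: "t < length p" for t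
  proof -
    have tk: "take (Suc t) p = take t p @ [p ! t]" using t by (simp add: take_Suc_conv_app_nth)
    have "lg n M (take (Suc t) p) v" using p lg_append[of n M "take (Suc t) p" "drop (Suc t) p" v] by simp
    then have l: "p ! t < n" "pos t (p ! t) > 0" unfolding tk by (auto simp: lg_append pos_def)
    have "pos (Suc t) = F n M (p ! t) (pos t)" unfolding pos_def tk by (simp add: pl_append)
    moreover have pP: "pos t \<in> Pn n" by (simp add: pos_def pl_Pn[OF v])
    ultimately show ?thesis using pot_dec[OF fin l(1) pP l(2)] by simp
  qed
  have dec: "Bf (pos (t + Suc d)) rho < Bf (pos t) rho" if "t + Suc d \<le> length p" for t d
    using that
  proof (induction d)
    case 0 then show ?case using step by simp
  next
    case (Suc d)
    then have "Bf (pos (t + Suc d)) rho < Bf (pos t) rho" by simp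
    moreover have "Bf (pos (Suc (t + Suc d))) rho < Bf (pos (t + Suc d)) rho" using step Suc.prems by simp
    ultimately show ?case by simp
  qed
  have inj: "inj_on pos {..length p}"
  proof (rule inj_onI)
    fix s t assume s: "s \<in> {..length p}" and t: "t \<in> {..length p}" and e: "pos s = pos t"
    show "s = t"
    proof (rule ccontr)
      assume "s \<noteq> t"
      then consider "s < t" | "t < s" by linarith
      then show False
      proof cases
        case 1
        then obtain d where td: "t = s + Suc d" using less_imp_Suc_add[OF 1] by auto
        have "s + Suc d \<le> length p" using t td by simp
        from dec[OF this] have "Bf (pos t) rho < Bf (pos s) rho" unfolding td .
        then show False unfolding e by simp
      next
        case 2
        then obtain d where sd: "s = t + Suc d" using less_imp_Suc_add[OF 2] by auto
        have "t + Suc d \<le> length p" using s sd by simp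
        from dec[OF this] have "Bf (pos s) rho < Bf (pos t) rho" unfolding sd .
        then show False unfolding e by simp
      qed
    qed
  qed
  have sub: "pos ` {..length p} \<subseteq> Orb v"
  proof
    fix x assume "x \<in> pos ` {..length p}"
    then obtain t where "x = pl n M (take t p) v" by (auto simp: pos_def)
    moreover have "take t p \<in> lists {..<n}" using lg_set[OF p] by (auto dest: in_set_takeD)
    ultimately show "x \<in> Orb v" by (auto simp: Orb_def)
  qed
  have "card (pos ` {..length p}) = Suc (length p)" using card_image[OF inj] by simp
  moreover have "card (pos ` {..length p}) \<le> card (Orb v)"
    using card_mono[OF Gset_finite_Orb[OF fin v] sub] .
  ultimately show ?thesis by simp
qed

lemma conv_exists:
  "v \<in> Pn n \<Longrightarrow> (\<forall>p. lg n M p v \<longrightarrow> length p \<le> N) \<Longrightarrow> \<exists>g. lg n M g v \<and> (\<forall>l<n. pl n M g v l \<le> 0)"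
proof (induction N arbitrary: v)
  case 0
  show ?case
  proof (cases "\<exists>i<n. v i > 0")
    case True
    then obtain i where "i < n" "v i > 0" by blast
    then have "lg n M [i] v" by simp
    then have "length [i] \<le> 0" using 0(2) by blast
    then show ?thesis by simp
  next
    case False
    then show ?thesis by (intro exI[of _ "[]"]) auto
  qed
next
  case (Suc N)
  show ?case
  proof (cases "\<exists>i<n. v i > 0")
    case True
    then obtain i where i: "i < n" "v i > 0" by blast
    have "\<forall>p. lg n M p (F n M i v) \<longrightarrow> length p \<le> N"
    proof (intro allI impI)
      fix p assume "lg n M p (F n M i v)"
      then have "lg n M (i # p) v" using i by simp
      then have "length (i # p) \<le> Suc N" using Suc.prems(2) by blast
      then show "length p \<le> N" by simp
    qed
    from Suc.IH[OF F_Pn this] obtain g where "lg n M g (F n M i v)" "\<forall>l<n. pl n M g (F n M i v) l \<le> 0" by blast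
    then show ?thesis using i by (intro exI[of _ "i # g"]) auto
  next
    case False
    then show ?thesis by (intro exI[of _ "[]"]) auto
  qed
qed

lemma fin_conv:
  assumes "finite Gset" "v \<in> Pn n"
  shows "\<exists>g. lg n M g v \<and> (\<forall>l<n. pl n M g v l \<le> 0)"
  using conv_exists[OF assms(2), of "card (Orb v)"] bounded_plays[OF assms] less_imp_le by blast

lemma W_fin_G_fin:
  assumes "finite (coxeter_group n m)"
  shows "finite Gset"
proof -
  let ?f = "\<lambda>X. restrict (pl n M (SOME w. w \<in> X)) (Pn n)"
  have "Gset \<subseteq> ?f ` (lists {..<n} // CR)"
  proof
    fix g assume "g \<in> Gset"
    then obtain w where w: "w \<in> lists {..<n}" "g = restrict (pl n M w) (Pn n)" by (auto simp: Gset_def)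
    let ?X = "CR `` {w}"
    have X: "?X \<in> lists {..<n} // CR" using w by (auto simp: quotient_def)
    have "w \<in> ?X" by simp
    then have "(SOME w'. w' \<in> ?X) \<in> ?X" by (rule someI)
    then have "(w, SOME w'. w' \<in> ?X) \<in> CR" by simp
    then have "?f ?X = g" using w CR_pl by (auto simp: restrict_def fun_eq_iff)
    then show "g \<in> ?f ` (lists {..<n} // CR)" using X by force
  qed
  moreover have "finite (?f ` (lists {..<n} // CR))" using assms by (simp add: coxeter_group_def)
  ultimately show ?thesis by (rule finite_subset)
qed

end

definition ev :: "nat \<Rightarrow> nat \<Rightarrow> real" where "ev l = (\<lambda>k. if k = l then 1 else 0)"

lemma sum_ev: "k < n \<Longrightarrow> (\<Sum>j<n. f j * ev k j) = f k"
proof -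
  assume k: "k < n"
  have "(\<Sum>j<n. f j * ev k j) = (\<Sum>j<n. if j = k then f j else 0)"
    by (intro sum.cong) (auto simp: ev_def)
  also have "\<dots> = f k" using k by (simp add: sum.delta')
  finally show ?thesis .
qed

lemma ip_ev: "l < n \<Longrightarrow> ip n x (ev l) = x l"
  unfolding ip_def by (rule sum_ev)

context egc
begin

definition sd where "sd j xi = (\<lambda>l. xi l - (if l = j then (\<Sum>k<n. M j k * xi k) else 0))"

fun sdw where "sdw [] xi = xi" | "sdw (i # w) xi = sd i (sdw w xi)"

lemma ip_F: "j < n \<Longrightarrow> ip n (F n M j mu) xi = ip n mu xi - mu j * (\<Sum>k<n. M j k * xi k)"
  by (simp add: ip_def F_def algebra_simps sum_subtractf sum_distrib_left)

lemma ip_sd: "j < n \<Longrightarrow> ip n mu (sd j xi) = ip n mu xi - mu j * (\<Sum>k<n. M j k * xi k)"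
proof -
  assume j: "j < n"
  have "ip n mu (sd j xi) = (\<Sum>l<n. mu l * xi l - (if l = j then mu l * (\<Sum>k<n. M j k * xi k) else 0))"
    unfolding ip_def sd_def by (intro sum.cong) (auto simp: algebra_simps)
  also have "\<dots> = ip n mu xi - mu j * (\<Sum>k<n. M j k * xi k)"
    using j by (simp add: sum_subtractf ip_def)
  finally show ?thesis .
qed

lemma ip_adj: "j < n \<Longrightarrow> ip n (F n M j mu) xi = ip n mu (sd j xi)"
  by (simp add: ip_F ip_sd)

lemma ip_pl: "w \<in> lists {..<n} \<Longrightarrow> ip n (pl n M w mu) xi = ip n mu (sdw w xi)"
  by (induction w arbitrary: mu) (auto simp: ip_adj)

lemma ip_diff: "ip n x (\<lambda>l. y l - z l) = ip n x y - ip n x z"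
  by (simp add: ip_def algebra_simps sum_subtractf)

lemma Orb_closed: "mu \<in> Orb v \<Longrightarrow> w \<in> lists {..<n} \<Longrightarrow> pl n M w mu \<in> Orb v"
  unfolding Orb_def by (auto simp: pl_append[symmetric] intro!: image_eqI)

lemma Orb_Pn: "v \<in> Pn n \<Longrightarrow> Orb v \<subseteq> Pn n"
  by (auto simp: Orb_def pl_Pn)

lemma self_Orb: "v \<in> Orb v"
  unfolding Orb_def by (rule image_eqI[of _ _ "[]"]) auto

lemma F_Orb: "mu \<in> Orb v \<Longrightarrow> i < n \<Longrightarrow> F n M i mu \<in> Orb v"
  using Orb_closed[of mu v "[i]"] by simp

lemma sum_Orb_F:
  assumes v: "v \<in> Pn n" and i: "i < n" and fin: "finite (Orb v)"
  shows "(\<Sum>mu\<in>Orb v. f (F n M i mu)) = (\<Sum>mu\<in>Orb v. f mu)"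
  using F_F[OF i] F_Orb[OF _ i] Orb_Pn[OF v]
  by (intro sum.reindex_bij_witness[of _ "F n M i" "F n M i"]) auto

lemma star:
  assumes v: "v \<in> Pn n" and i: "i < n" and fin: "finite (Orb v)"
  shows "2 * (\<Sum>mu\<in>Orb v. ip n mu xi * mu i) = (\<Sum>k<n. M i k * xi k) * (\<Sum>mu\<in>Orb v. mu i * mu i)"
proof -
  let ?c = "\<Sum>k<n. M i k * xi k"
  have "(\<Sum>mu\<in>Orb v. ip n mu xi * mu i) = (\<Sum>mu\<in>Orb v. ip n (F n M i mu) xi * F n M i mu i)"
    using sum_Orb_F[OF v i fin, of "\<lambda>mu. ip n mu xi * mu i"] by simp
  also have "\<dots> = (\<Sum>mu\<in>Orb v. ?c * (mu i * mu i) - ip n mu xi * mu i)"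
    using i by (intro sum.cong) (auto simp: ip_F F_i algebra_simps)
  also have "\<dots> = ?c * (\<Sum>mu\<in>Orb v. mu i * mu i) - (\<Sum>mu\<in>Orb v. ip n mu xi * mu i)"
    by (simp add: sum_subtractf sum_distrib_left)
  finally show ?thesis by simp
qed

lemma separation:
  assumes v: "v \<in> Pn n" and fin: "finite (Orb v)" and dom: "\<forall>l<n. v l \<ge> 0" and nz: "\<exists>l<n. v l \<noteq> 0"
    and conn: "egcm_connected n M"
    and xi: "\<forall>mu\<in>Orb v. ip n mu xi = 0"
  shows "\<forall>l<n. xi l = 0"
proof -
  let ?O = "Orb v"
  define d where "d i = (\<Sum>mu\<in>?O. mu i * mu i)" for i
  define A where "A k l = (\<Sum>mu\<in>?O. mu k * mu l)" for k l
  have Aeq: "2 * A k l = M l k * d l" if "k < n" "l < n" for k l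
  proof -
    have "2 * (\<Sum>mu\<in>?O. ip n mu (ev k) * mu l) = (\<Sum>j<n. M l j * ev k j) * d l"
      using star[OF v that(2) fin, of "ev k"] by (simp add: d_def)
    moreover have "(\<Sum>mu\<in>?O. ip n mu (ev k) * mu l) = A k l" using that by (simp add: ip_ev A_def)
    moreover have "(\<Sum>j<n. M l j * ev k j) = M l k" using that by (simp add: sum_ev)
    ultimately show ?thesis by simp
  qed
  have dnn: "d i \<ge> 0" for i by (simp add: d_def sum_nonneg)
  have dpos_of: "d i > 0" if "mu \<in> ?O" "mu i \<noteq> 0" for mu i
  proof -
    have "mu i * mu i \<le> d i" unfolding d_def
      by (rule member_le_sum[OF that(1)]) (simp_all add: fin)
    moreover have "mu i * mu i > 0" using that(2) by (cases "mu i > 0") (auto simp: mult_neg_neg)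
    ultimately show ?thesis by simp
  qed
  obtain i0 where i0: "i0 < n" "v i0 \<noteq> 0" using nz by blast
  have d0: "d i0 > 0" using dpos_of[OF self_Orb i0(2)] .
  have dprop: "d j > 0" if "(egcm_adj n M)\<^sup>*\<^sup>* i0 j" for j
    using that
  proof (induction rule: rtranclp_induct)
    case base then show ?case using d0 .
  next
    case (step i j)
    have adj: "i < n" "j < n" "i \<noteq> j" "M i j \<noteq> 0" using step(2) by (auto simp: egcm_adj_def)
    have "2 * A j i = M i j * d i" using Aeq adj by simp
    moreover have "M i j * d i \<noteq> 0" using adj(4) step(3) by simp
    ultimately have "A j i \<noteq> 0" by linarith
    then obtain mu where "mu \<in> ?O" "mu j * mu i \<noteq> 0" unfolding A_def
      using sum.neutral[of ?O "\<lambda>mu. mu j * mu i"] by blast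
    then show ?case using dpos_of by simp
  qed
  have dpos: "d i > 0" if "i < n" for i
    using dprop conn i0(1) that by (simp add: egcm_connected_def)
  define y where "y l = \<bar>xi l\<bar>" for l
  have ipsq: "(\<Sum>mu\<in>?O. ip n mu z * ip n mu z) = (\<Sum>k<n. \<Sum>l<n. A k l * z k * z l)" for z
  proof -
    have "(\<Sum>mu\<in>?O. ip n mu z * ip n mu z) = (\<Sum>mu\<in>?O. \<Sum>k<n. \<Sum>l<n. mu k * mu l * z k * z l)"
      unfolding ip_def by (simp add: sum_product algebra_simps)
    also have "\<dots> = (\<Sum>k<n. \<Sum>l<n. A k l * z k * z l)"
      unfolding A_def by (simp add: sum.swap[of _ ?O] sum_distrib_right)
    finally show ?thesis .
  qed
  have Q0: "(\<Sum>mu\<in>?O. ip n mu xi * ip n mu xi) = 0" using xi by simp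
  have le: "(\<Sum>k<n. \<Sum>l<n. A k l * y k * y l) \<le> (\<Sum>k<n. \<Sum>l<n. A k l * xi k * xi l)"
  proof (intro sum_mono)
    fix k l assume k: "k \<in> {..<n}" and l: "l \<in> {..<n}"
    show "A k l * y k * y l \<le> A k l * xi k * xi l"
    proof (cases "k = l")
      case True then show ?thesis by (simp add: y_def abs_mult_self_eq)
    next
      case False
      have "2 * A k l = M l k * d l" using Aeq k l by simp
      moreover have "M l k \<le> 0" using M_offdiag k l False by auto
      moreover have "M l k * d l \<le> 0" using \<open>M l k \<le> 0\<close> dnn[of l] by (rule mult_nonpos_nonneg)
      ultimately have Ak: "A k l \<le> 0" by linarith
      have "xi k * xi l \<le> y k * y l" by (simp add: y_def abs_mult[symmetric])
      then have "A k l * (y k * y l) \<le> A k l * (xi k * xi l)" using Ak by (rule mult_left_mono_neg)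
      then show ?thesis by (simp add: mult.assoc)
    qed
  qed
  have Qy: "(\<Sum>mu\<in>?O. ip n mu y * ip n mu y) \<le> 0" using le ipsq[of y] ipsq[of xi] Q0 by simp
  have yz: "ip n mu y = 0" if "mu \<in> ?O" for mu
  proof -
    have "(\<Sum>mu\<in>?O. ip n mu y * ip n mu y) \<ge> 0" by (intro sum_nonneg) simp
    then have "(\<Sum>mu\<in>?O. ip n mu y * ip n mu y) = 0" using Qy by linarith
    then have "\<forall>mu\<in>?O. ip n mu y * ip n mu y = 0"
      using sum_nonneg_eq_0_iff[OF fin, of "\<lambda>mu. ip n mu y * ip n mu y"] by simp
    then show ?thesis using that by simp
  qed
  have vzero: "v l * y l = 0" if "l < n" for l
  proof -
    have "(\<Sum>l<n. v l * y l) = 0" using yz[OF self_Orb] by (simp add: ip_def)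
    moreover have "\<forall>l\<in>{..<n}. v l * y l \<ge> 0" using dom by (simp add: y_def)
    ultimately show ?thesis using sum_nonneg_eq_0_iff[of "{..<n}" "\<lambda>l. v l * y l"] that by simp
  qed
  have rowzero: "(\<Sum>k<n. M i k * y k) = 0" if "i < n" for i
  proof -
    have "(\<Sum>mu\<in>?O. ip n mu y * mu i) = 0" using yz by simp
    then have "(\<Sum>k<n. M i k * y k) * d i = 0" using star[OF v that fin, of y] by (simp add: d_def)
    then show ?thesis using dpos[OF that] by simp
  qed
  have zprop: "xi j = 0" if "xi i = 0" "i < n" "egcm_adj n M i j" for i j
  proof -
    have adj: "j < n" "i \<noteq> j" "M i j \<noteq> 0" using that(3) by (auto simp: egcm_adj_def)
    have nonpos: "\<forall>k\<in>{..<n}. - (M i k * y k) \<ge> 0"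
    proof
      fix k assume k: "k \<in> {..<n}"
      show "- (M i k * y k) \<ge> 0"
      proof (cases "k = i")
        case True then show ?thesis using that by (simp add: y_def)
      next
        case False
        then have "M i k \<le> 0" using M_offdiag that(2) k by auto
        then show ?thesis by (simp add: y_def mult_nonpos_nonneg)
      qed
    qed
    have "(\<Sum>k<n. - (M i k * y k)) = 0" using rowzero[OF that(2)] by (simp add: sum_negf)
    then have "\<forall>k\<in>{..<n}. - (M i k * y k) = 0" using sum_nonneg_eq_0_iff[of "{..<n}" "\<lambda>k. - (M i k * y k)"] nonpos by blast
    then have "- (M i j * y j) = 0" using adj by blast
    then show ?thesis using adj by (simp add: y_def)
  qed
  show ?thesis
  proof (cases "\<exists>i<n. xi i = 0")
    case True
    then obtain i where i: "i < n" "xi i = 0" by blast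
    have "xi j = 0" if "(egcm_adj n M)\<^sup>*\<^sup>* i j" for j
      using that
    proof (induction rule: rtranclp_induct)
      case base then show ?case using i by simp
    next
      case (step a b)
      have "a < n" using step(2) by (simp add: egcm_adj_def)
      then show ?case using zprop step by blast
    qed
    then show ?thesis using conn i(1) by (simp add: egcm_connected_def)
  next
    case False
    have "v l = 0" if "l < n" for l using vzero[OF that] False that by (simp add: y_def)
    then show ?thesis using nz by blast
  qed
qed

lemma G_finite_of_sep:
  assumes v: "v \<in> Pn n" and fin: "finite (Orb v)"
    and sep: "\<And>xi. \<forall>mu\<in>Orb v. ip n mu xi = 0 \<Longrightarrow> \<forall>l<n. xi l = 0"
  shows "finite Gset"
proof -
  let ?O = "Orb v"
  let ?Phi = "\<lambda>g. restrict g ?O"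
  have inj: "inj_on ?Phi Gset"
  proof (rule inj_onI)
    fix g1 g2 assume g1: "g1 \<in> Gset" and g2: "g2 \<in> Gset" and e: "restrict g1 ?O = restrict g2 ?O"
    obtain w1 where w1: "w1 \<in> lists {..<n}" "g1 = restrict (pl n M w1) (Pn n)" using Gset_elem[OF g1] by blast
    obtain w2 where w2: "w2 \<in> lists {..<n}" "g2 = restrict (pl n M w2) (Pn n)" using Gset_elem[OF g2] by blast
    have agree: "pl n M w1 mu = pl n M w2 mu" if "mu \<in> ?O" for mu
    proof -
      have muP: "mu \<in> Pn n" using Orb_Pn[OF v] that by auto
      have "g1 mu = g2 mu" using fun_cong[OF e, of mu] that by simp
      then show ?thesis using w1 w2 muP by simp
    qed
    have "pl n M w1 x l = pl n M w2 x l" if x: "x \<in> Pn n" for x l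
    proof (cases "l < n")
      case True
      define xi where "xi = (\<lambda>k. sdw w1 (ev l) k - sdw w2 (ev l) k)"
      have "\<forall>mu\<in>?O. ip n mu xi = 0"
      proof
        fix mu assume mu: "mu \<in> ?O"
        have "ip n mu xi = ip n (pl n M w1 mu) (ev l) - ip n (pl n M w2 mu) (ev l)"
          unfolding xi_def ip_diff using ip_pl w1 w2 by simp
        then show "ip n mu xi = 0" using agree[OF mu] by simp
      qed
      then have z: "\<forall>k<n. xi k = 0" by (rule sep)
      have "ip n x xi = 0" unfolding ip_def using z by simp
      then have "ip n (pl n M w1 x) (ev l) - ip n (pl n M w2 x) (ev l) = 0"
        unfolding xi_def ip_diff using ip_pl w1 w2 by simp
      then show ?thesis using True by (simp add: ip_ev)
    next
      case False
      then show ?thesis using pl_Pn[OF x] by (simp add: Pn_def)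
    qed
    then show "g1 = g2" using w1 w2 by (auto simp: restrict_def fun_eq_iff)
  qed
  have sub: "?Phi ` Gset \<subseteq> PiE ?O (\<lambda>_. ?O)"
  proof
    fix h assume "h \<in> ?Phi ` Gset"
    then obtain g where g: "g \<in> Gset" "h = restrict g ?O" by blast
    obtain w where w: "w \<in> lists {..<n}" "g = restrict (pl n M w) (Pn n)" using Gset_elem[OF g(1)] by blast
    have "g mu \<in> ?O" if "mu \<in> ?O" for mu
    proof -
      have "mu \<in> Pn n" using Orb_Pn[OF v] that by auto
      then show ?thesis using w Orb_closed[OF that w(1)] by simp
    qed
    then show "h \<in> PiE ?O (\<lambda>_. ?O)" using g by auto
  qed
  have "finite (PiE ?O (\<lambda>_. ?O))" using fin by (simp add: finite_PiE)
  then have "finite (?Phi ` Gset)" using sub finite_subset by blast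
  then show ?thesis using inj finite_image_iff by blast
qed

lemma orbit_reach:
  assumes v: "v \<in> Pn n" and dom: "\<forall>l<n. v l \<ge> 0" and g: "lg n M g v" "\<forall>l<n. pl n M g v l \<le> 0"
  shows "w \<in> lists {..<n} \<Longrightarrow> \<exists>p. lg n M p v \<and> pl n M p v = pl n M w v"
proof (induction w rule: rev_induct)
  case Nil then show ?case by (intro exI[of _ "[]"]) simp
next
  case (snoc i w)
  then have i: "i < n" and w: "w \<in> lists {..<n}" by auto
  from snoc.IH[OF w] obtain p where p: "lg n M p v" "pl n M p v = pl n M w v" by blast
  define mu where "mu = pl n M p v"
  have muP: "mu \<in> Pn n" using pl_Pn[OF v] by (simp add: mu_def)
  have goal: "pl n M (w @ [i]) v = F n M i mu" using p by (simp add: pl_append mu_def)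
  consider "mu i > 0" | "mu i = 0" | "mu i < 0" by linarith
  then show ?case
  proof cases
    case 1
    then have "lg n M (p @ [i]) v" using p i by (simp add: lg_append mu_def)
    then show ?thesis using goal by (intro exI[of _ "p @ [i]"]) (simp add: pl_append mu_def)
  next
    case 2
    have "F n M i mu = mu" using muP 2 by (auto simp: F_def Pn_def fun_eq_iff)
    then show ?thesis using goal p by (intro exI[of _ p]) (simp add: mu_def)
  next
    case 3
    define nu where "nu = neg mu"
    have nuP: "nu \<in> Pn n" using muP by (simp add: nu_def)
    from rev_play[OF p(1) v] have rp: "lg n M (rev p) nu" "pl n M (rev p) nu = neg v"
      by (simp_all add: nu_def mu_def)
    have fin0: "\<forall>l<n. pl n M (rev p) nu l \<le> 0" using rp(2) dom by (simp add: neg_def)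
    have li: "lg n M [i] nu" using 3 i by (simp add: nu_def neg_def)
    from SC'[OF nuP rp(1) fin0 li] obtain r where
      r: "lg n M ([i] @ r) nu" "pl n M ([i] @ r) nu = pl n M (rev p) nu" by blast
    from rev_play[OF r(1) nuP] have
      rr: "lg n M (rev ([i] @ r)) (neg (pl n M ([i] @ r) nu))" "pl n M (rev ([i] @ r)) (neg (pl n M ([i] @ r) nu)) = neg nu"
      by auto
    have nn: "neg (pl n M ([i] @ r) nu) = v" using r(2) rp(2) by simp
    have l2: "lg n M (rev r) v" using rr(1) nn by (simp add: lg_append)
    have "F n M i (pl n M (rev r) v) = mu" using rr(2) nn by (simp add: pl_append nu_def)
    then have "pl n M (rev r) v = F n M i mu" using F_F[OF i pl_Pn[OF v]] by metis
    then show ?thesis using l2 goal by (intro exI[of _ "rev r"]) simp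
  qed
qed

lemma adm_G_finite:
  assumes v: "v \<in> Pn n" and dom: "\<forall>l<n. v l \<ge> 0" and nz: "\<exists>l<n. v l \<noteq> 0"
    and g: "lg n M g v" "\<forall>l<n. pl n M g v l \<le> 0" and conn: "egcm_connected n M"
  shows "finite Gset"
proof -
  have "Orb v \<subseteq> (\<lambda>p. pl n M p v) ` {p. set p \<subseteq> {..<n} \<and> length p \<le> length g}"
  proof
    fix x assume "x \<in> Orb v"
    then obtain w where w: "w \<in> lists {..<n}" "x = pl n M w v" by (auto simp: Orb_def)
    from orbit_reach[OF v dom g w(1)] obtain p where p: "lg n M p v" "pl n M p v = x" using w by auto
    have "length p \<le> length g" using SC'[OF v g p(1)] by simp
    moreover have "set p \<subseteq> {..<n}" using lg_set[OF p(1)] .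
    ultimately show "x \<in> (\<lambda>p. pl n M p v) ` {p. set p \<subseteq> {..<n} \<and> length p \<le> length g}" using p by auto
  qed
  moreover have "finite {p. set p \<subseteq> {..<n} \<and> length p \<le> length g}"
    by (rule finite_lists_length_le) simp
  ultimately have fin: "finite (Orb v)" by (meson finite_imageI finite_subset)
  show ?thesis
    by (rule G_finite_of_sep[OF v fin]) (rule separation[OF v fin dom nz conn])
qed

end

context egc
begin

lemma ev_Pn: "k < n \<Longrightarrow> ev k \<in> Pn n"
  by (simp add: ev_def Pn_def)

lemma pl_sum: "(\<forall>k<(NN::nat). x k \<in> Pn n) \<Longrightarrow> pl n M w (\<lambda>l. \<Sum>k<NN. c k * x k l) = (\<lambda>l. \<Sum>k<NN. c k * pl n M w (x k) l)"
proof (induction NN)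
  case 0
  have "(\<lambda>l. 0::real) = lc 0 (\<lambda>l. 0) 0 (\<lambda>l. 0)" by (simp add: lc_def)
  moreover have "(\<lambda>l. 0::real) \<in> Pn n" by (simp add: Pn_def)
  ultimately have "pl n M w (\<lambda>l. 0) = lc 0 (pl n M w (\<lambda>l. 0)) 0 (pl n M w (\<lambda>l. 0))"
    using pl_lc by metis
  then show ?case by (simp add: lc_def fun_eq_iff)
next
  case (Suc NN)
  have sP: "(\<lambda>l. \<Sum>k<NN. c k * x k l) \<in> Pn n" using Suc.prems by (simp add: Pn_def)
  have "(\<lambda>l. \<Sum>k<Suc NN. c k * x k l) = lc 1 (\<lambda>l. \<Sum>k<NN. c k * x k l) (c NN) (x NN)"
    by (simp add: lc_def fun_eq_iff)
  then have "pl n M w (\<lambda>l. \<Sum>k<Suc NN. c k * x k l) = lc 1 (pl n M w (\<lambda>l. \<Sum>k<NN. c k * x k l)) (c NN) (pl n M w (x NN))"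
    using pl_lc[OF sP, of "x NN" w 1 "c NN"] Suc.prems by simp
  then show ?case using Suc by (simp add: lc_def fun_eq_iff)
qed

lemma sum_ev2: "(\<Sum>k<n. v k * ev k l) = (if l < n then v l else 0)"
proof -
  have "(\<Sum>k<n. v k * ev k l) = (\<Sum>k<n. if k = l then v k else 0)" by (intro sum.cong) (auto simp: ev_def)
  then show ?thesis by (simp add: sum.delta)
qed

lemma Pn_decomp: "v \<in> Pn n \<Longrightarrow> v = (\<lambda>l. \<Sum>k<n. v k * ev k l)"
  by (auto simp: fun_eq_iff Pn_def sum_ev2)

lemma pl_rev_cancel: "w \<in> lists {..<n} \<Longrightarrow> x \<in> Pn n \<Longrightarrow> pl n M w (pl n M (rev w) x) = x"
proof -
  assume w: "w \<in> lists {..<n}" and x: "x \<in> Pn n"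
  have "(rev w @ w, []) \<in> CR" using CR_rev_cancel w by auto
  then have "pl n M (rev w @ w) x = x" using CR_pl[OF _ x] by fastforce
  then show ?thesis by (simp add: pl_append)
qed

lemma generic:
  assumes fin: "finite Gset"
  shows "\<exists>v\<in>Pn n. (\<forall>l<n. v l > 0) \<and> (\<forall>w\<in>lists {..<n}. \<forall>i<n. pl n M w v i \<noteq> 0)"
proof -
  define lam where "lam t = (\<lambda>l. \<Sum>k<n. t ^ k * ev k l)" for t :: real
  define P where "P g i = (\<Sum>k<n. monom (g (ev k) i) k)" for g :: "(nat \<Rightarrow> real) \<Rightarrow> (nat \<Rightarrow> real)" and i
  have lamP: "lam t \<in> Pn n" for t by (simp add: lam_def Pn_def ev_def)
  have glam: "g (lam t) i = poly (P g i) t" if g: "g \<in> Gset" for g i t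
  proof -
    obtain w where w: "w \<in> lists {..<n}" "g = restrict (pl n M w) (Pn n)" using Gset_elem[OF g] by blast
    have "g (lam t) = pl n M w (lam t)" using w lamP by simp
    also have "\<dots> = (\<lambda>l. \<Sum>k<n. t ^ k * pl n M w (ev k) l)"
      unfolding lam_def by (rule pl_sum) (simp add: ev_Pn)
    finally have "g (lam t) i = (\<Sum>k<n. t ^ k * g (ev k) i)" using w by (simp add: ev_Pn)
    then show ?thesis by (simp add: P_def poly_sum poly_monom mult.commute)
  qed
  have Pnz: "P g i \<noteq> 0" if g: "g \<in> Gset" and i: "i < n" for g i
  proof
    assume P0: "P g i = 0"
    have c: "g (ev k) i = 0" if "k < n" for k
    proof -
      have "coeff (P g i) k = g (ev k) i" using that by (simp add: P_def coeff_sum coeff_monom)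
      then show ?thesis using P0 by simp
    qed
    obtain w where w: "w \<in> lists {..<n}" "g = restrict (pl n M w) (Pn n)" using Gset_elem[OF g] by blast
    define x where "x = pl n M (rev w) (ev i)"
    have xP: "x \<in> Pn n" using pl_Pn ev_Pn[OF i] by (simp add: x_def)
    have "g x = ev i" using w xP pl_rev_cancel[OF w(1) ev_Pn[OF i]] by (simp add: x_def)
    moreover have "g x = (\<lambda>l. \<Sum>k<n. x k * g (ev k) l)"
    proof -
      have "g x = pl n M w (\<lambda>l. \<Sum>k<n. x k * ev k l)" using w xP Pn_decomp[OF xP] by simp
      also have "\<dots> = (\<lambda>l. \<Sum>k<n. x k * pl n M w (ev k) l)" by (rule pl_sum) (simp add: ev_Pn)
      finally show ?thesis using w by (simp add: ev_Pn)
    qed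
    ultimately have "ev i i = (\<Sum>k<n. x k * g (ev k) i)" by metis
    then show False using c by (simp add: ev_def)
  qed
  define Bad where "Bad = (\<Union>g\<in>Gset. \<Union>i\<in>{..<n}. {t. poly (P g i) t = 0})"
  have "finite Bad" unfolding Bad_def using fin Pnz poly_roots_finite by auto
  moreover have "infinite {0::real<..}" by (simp add: infinite_Ioi)
  ultimately have "infinite ({0<..} - Bad)" using Diff_infinite_finite by blast
  then have "{0<..} - Bad \<noteq> {}" by (metis finite.emptyI)
  then obtain t where t: "t \<in> {0<..}" "t \<notin> Bad" by blast
  show ?thesis
  proof (intro bexI[of _ "lam t"] conjI allI impI ballI)
    show "lam t \<in> Pn n" by (rule lamP)
    fix l assume "l < n"
    then show "lam t l > 0" using t by (simp add: lam_def sum_ev2)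
  next
    fix w i assume w: "w \<in> lists {..<n}" and i: "i < n"
    have gG: "restrict (pl n M w) (Pn n) \<in> Gset" using w by (auto simp: Gset_def)
    have "restrict (pl n M w) (Pn n) (lam t) i \<noteq> 0"
      using glam[OF gG] t i gG by (auto simp: Bad_def)
    then show "pl n M w (lam t) i \<noteq> 0" using lamP by simp
  qed
qed

lemma W_finite:
  assumes fin: "finite Gset"
  shows "finite (coxeter_group n m)"
proof -
  obtain v where v: "v \<in> Pn n" "\<forall>l<n. v l > 0" and gen: "\<forall>w\<in>lists {..<n}. \<forall>i<n. pl n M w v i \<noteq> 0"
    using generic[OF fin] by blast
  have red: "\<exists>p. lg n M p v \<and> (w, p) \<in> CR" if "w \<in> lists {..<n}" for w
    using that
  proof (induction w rule: rev_induct)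
    case Nil then show ?case by (intro exI[of _ "[]"]) simp
  next
    case (snoc i w)
    then have i: "i < n" and w: "w \<in> lists {..<n}" by auto
    from snoc.IH[OF w] obtain p where p: "lg n M p v" "(w, p) \<in> CR" by blast
    have pset: "set p \<subseteq> {..<n}" using lg_set[OF p(1)] .
    define mu where "mu = pl n M p v"
    have mnz: "mu i \<noteq> 0" using gen pset i by (auto simp: mu_def)
    have c0: "(w @ [i], p @ [i]) \<in> CR" using CR_appR[OF p(2)] i by simp
    show ?case
    proof (cases "mu i > 0")
      case True
      then have "lg n M (p @ [i]) v" using p i by (simp add: lg_append mu_def)
      then show ?thesis using c0 by blast
    next
      case False
      then have neg0: "mu i < 0" using mnz by simp
      define nu where "nu = neg mu"
      have nuP: "nu \<in> Pn n" using pl_Pn[OF v(1)] by (simp add: nu_def mu_def)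
      from rev_play[OF p(1) v(1)] have rp: "lg n M (rev p) nu" "pl n M (rev p) nu = neg v"
        by (simp_all add: nu_def mu_def)
      have fin0: "\<forall>l<n. pl n M (rev p) nu l \<le> 0" using rp(2) v(2) by (simp add: neg_def less_imp_le)
      have li: "lg n M [i] nu" using neg0 i by (simp add: nu_def neg_def)
      from SC'[OF nuP rp(1) fin0 li] obtain r where
        r: "lg n M ([i] @ r) nu" "pl n M ([i] @ r) nu = pl n M (rev p) nu" "([i] @ r, rev p) \<in> CR" by blast
      from rev_play[OF r(1) nuP] have rr: "lg n M (rev ([i] @ r)) (neg (pl n M ([i] @ r) nu))" by auto
      have nn: "neg (pl n M ([i] @ r) nu) = v" using r(2) rp(2) by simp
      have l2: "lg n M (rev r) v" using rr nn by (simp add: lg_append)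
      have rset: "set r \<subseteq> {..<n}" using lg_set[OF r(1)] by auto
      have "(rev ([i] @ r), rev (rev p)) \<in> CR" using CR_rev[OF r(3)] .
      then have c1: "(rev r @ [i], p) \<in> CR" by simp
      have c2: "(p @ [i], rev r @ [i, i]) \<in> CR" using CR_appR[OF CR_sym[OF c1], of "[i]"] i by simp
      have c3: "(rev r @ [i, i] @ [], rev r @ []) \<in> CR" using CR_cancel[of i "rev r" "[]"] i rset by simp
      have "(w @ [i], rev r) \<in> CR" using c0 c2 c3 by (auto intro: CR_trans)
      then show ?thesis using l2 by blast
    qed
  qed
  let ?L = "{p. set p \<subseteq> {..<n} \<and> length p \<le> card (Orb v)}"
  have "lists {..<n} // CR \<subseteq> (\<lambda>p. CR `` {p}) ` ?L"
  proof
    fix X assume "X \<in> lists {..<n} // CR"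
    then obtain w where w: "w \<in> lists {..<n}" "X = CR `` {w}" by (auto simp: quotient_def)
    obtain p where p: "lg n M p v" "(w, p) \<in> CR" using red[OF w(1)] by blast
    have "CR `` {w} = CR `` {p}"
      using p(2) CR_sym CR_trans by blast
    moreover have "p \<in> ?L" using lg_set[OF p(1)] bounded_plays[OF fin v(1) p(1)] by simp
    ultimately show "X \<in> (\<lambda>p. CR `` {p}) ` ?L" using w by blast
  qed
  moreover have "finite ?L" by (rule finite_lists_length_le) simp
  ultimately show ?thesis unfolding coxeter_group_def by (meson finite_imageI finite_subset)
qed

end

lemma Rs_fire: "i < n \<Longrightarrow> Rs n (fire M i lam) = F n M i (Rs n lam)"
  by (auto simp: Rs_def F_def fire_def fun_eq_iff)

lemma conv_legal: "legal_play n M lam w = lg n M w (Rs n lam)"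
proof (induction w arbitrary: lam)
  case Nil then show ?case by simp
next
  case (Cons i w)
  show ?case
  proof (cases "i < n")
    case True
    then show ?thesis using Cons[of "fire M i lam"] by (simp add: Rs_fire) (simp add: Rs_def)
  next
    case False then show ?thesis by simp
  qed
qed

lemma conv_play: "set w \<subseteq> {..<n} \<Longrightarrow> Rs n (play M lam w) = pl n M w (Rs n lam)"
  by (induction w arbitrary: lam) (auto simp: Rs_fire)

lemma conv_game: "convergent_game n M lam w \<longleftrightarrow> lg n M w (Rs n lam) \<and> (\<forall>l<n. pl n M w (Rs n lam) l \<le> 0)"
proof
  assume c: "convergent_game n M lam w"
  then have l: "lg n M w (Rs n lam)" by (simp add: convergent_game_def conv_legal)
  have "Rs n (play M lam w) = pl n M w (Rs n lam)" using lg_set[OF l] conv_play by blast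
  then have "\<forall>l<n. pl n M w (Rs n lam) l = play M lam w l"
  proof (intro allI impI)
    fix l assume l: "l < n" and e: "Rs n (play M lam w) = pl n M w (Rs n lam)"
    have "Rs n (play M lam w) l = play M lam w l" using l by (simp add: Rs_def)
    then show "pl n M w (Rs n lam) l = play M lam w l" using e by simp
  qed
  then show "lg n M w (Rs n lam) \<and> (\<forall>l<n. pl n M w (Rs n lam) l \<le> 0)"
    using c l by (simp add: convergent_game_def)
next
  assume c: "lg n M w (Rs n lam) \<and> (\<forall>l<n. pl n M w (Rs n lam) l \<le> 0)"
  have "Rs n (play M lam w) = pl n M w (Rs n lam)" using lg_set c conv_play by blast
  then have "\<forall>l<n. pl n M w (Rs n lam) l = play M lam w l"
  proof (intro allI impI)
    fix l assume l: "l < n" and e: "Rs n (play M lam w) = pl n M w (Rs n lam)"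
    have "Rs n (play M lam w) l = play M lam w l" using l by (simp add: Rs_def)
    then show "pl n M w (Rs n lam) l = play M lam w l" using e by simp
  qed
  then show "convergent_game n M lam w" using c by (simp add: convergent_game_def conv_legal)
qed

context egc
begin

lemma irr_conn:
  assumes irr: "coxeter_irreducible n m"
  shows "egcm_connected n M"
proof -
  have adj: "egcm_adj n M i j" if "cox_adj n m i j" for i j
  proof -
    have h: "i < n" "j < n" "i \<noteq> j" "m i j \<ge> 3" using that by (auto simp: cox_adj_def)
    show ?thesis
    proof (cases "m i j")
      case infinity
      then have "M i j * M j i \<ge> 4" using inf_facts h by blast
      then show ?thesis using h by (auto simp: egcm_adj_def)
    next
      case (enat k)
      then have k3: "k \<ge> 3" using h(4) by simp
      have c: "M i j * M j i = 4 * (cos (pi / k))\<^sup>2" using fin_facts h enat by blast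
      have "cos (pi / k) > 0"
      proof -
        have "pi / real k < pi / 2" by (rule divide_strict_left_mono) (use k3 in auto)
        moreover have "0 < pi / real k" using k3 by simp
        ultimately show ?thesis by (intro cos_gt_zero) auto
      qed
      then have "M i j * M j i \<noteq> 0" using c by simp
      then show ?thesis using h by (auto simp: egcm_adj_def)
    qed
  qed
  have "(egcm_adj n M)\<^sup>*\<^sup>* i j" if "(cox_adj n m)\<^sup>*\<^sup>* i j" for i j
    using that by (induction rule: rtranclp_induct) (auto intro: rtranclp.rtrancl_into_rtrancl adj)
  then show ?thesis using irr by (auto simp: egcm_connected_def coxeter_irreducible_def)
qed

lemma main:
  assumes irr: "coxeter_irreducible n m"
  shows "finite (coxeter_group n m) \<longleftrightarrow> admissible n M"
proof
  assume W: "finite (coxeter_group n m)"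
  have G: "finite Gset" by (rule W_fin_G_fin[OF W])
  have n1: "0 < n" using irr by (simp add: coxeter_irreducible_def)
  have e0: "ev 0 \<in> Pn n" using ev_Pn n1 by simp
  obtain g where g: "lg n M g (ev 0)" "\<forall>l<n. pl n M g (ev 0) l \<le> 0" using fin_conv[OF G e0] by blast
  have R: "Rs n (ev 0) = ev 0" using e0 by (auto simp: Rs_def Pn_def fun_eq_iff)
  have "convergent_game n M (ev 0) g" using g R by (simp add: conv_game)
  moreover have "\<forall>i<n. ev 0 i \<ge> 0" by (simp add: ev_def)
  moreover have "\<exists>i<n. ev 0 i \<noteq> 0" using n1 by (intro exI[of _ 0]) (simp add: ev_def)
  ultimately show "admissible n M" using irr_conn[OF irr] by (auto simp: admissible_def)
next
  assume "admissible n M"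
  then obtain lam g where conn: "egcm_connected n M" and lam: "\<forall>i<n. lam i \<ge> 0" "\<exists>i<n. lam i \<noteq> 0"
    and c: "convergent_game n M lam g" by (auto simp: admissible_def)
  let ?v = "Rs n lam"
  have v: "?v \<in> Pn n" by simp
  have dom: "\<forall>l<n. ?v l \<ge> 0" using lam by (simp add: Rs_def)
  have nz: "\<exists>l<n. ?v l \<noteq> 0"
  proof -
    obtain i where "i < n" "lam i \<noteq> 0" using lam(2) by blast
    then show ?thesis by (intro exI[of _ i]) (simp add: Rs_def)
  qed
  have gg: "lg n M g ?v" "\<forall>l<n. pl n M g ?v l \<le> 0" using c by (simp_all add: conv_game)
  have "finite Gset" by (rule adm_G_finite[OF v dom nz gg conn])
  then show "finite (coxeter_group n m)" by (rule W_finite)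
qed

end

definition M0 :: "(nat \<Rightarrow> nat \<Rightarrow> enat) \<Rightarrow> nat \<Rightarrow> nat \<Rightarrow> real" where
  "M0 m i j = (if i = j then 2 else (case m i j of enat k \<Rightarrow> - 2 * cos (pi / k) | \<infinity> \<Rightarrow> -2))"

lemma M0_good:
  assumes cm: "coxeter_matrix n m"
  shows "egcm n (M0 m) \<and> egcm_assoc n (M0 m) m"
proof -
  have sym: "m i j = m j i" and ge2: "m i j \<ge> 2" if "i < n" "j < n" "i \<noteq> j" for i j
    using cm that by (auto simp: coxeter_matrix_def)
  have prod: "M0 m i j * M0 m j i = (case m i j of enat k \<Rightarrow> 4 * (cos (pi / k))\<^sup>2 | \<infinity> \<Rightarrow> 4)"
    if "i < n" "j < n" "i \<noteq> j" for i j
    using sym[OF that, symmetric] that by (cases "m i j") (auto simp: M0_def power2_eq_square)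
  have pair: "M0 m i j \<le> 0 \<and> (M0 m i j \<noteq> 0 \<longleftrightarrow> M0 m j i \<noteq> 0) \<and>
        (M0 m i j * M0 m j i \<noteq> 0 \<longrightarrow>
           M0 m i j * M0 m j i \<ge> 4 \<or> (\<exists>k::nat. k \<ge> 3 \<and> M0 m i j * M0 m j i = 4 * (cos (pi / k))\<^sup>2))"
    if h: "i < n" "j < n" "i \<noteq> j" for i j
  proof (cases "m i j")
    case (enat k)
    then have k2: "k \<ge> 2" using ge2[OF h] by simp
    have c0: "cos (pi / k) \<ge> 0" using k2 by (rule cos_nonneg_k)
    have a1: "M0 m i j \<le> 0" using h enat c0 by (simp add: M0_def)
    have a2: "(M0 m i j \<noteq> 0 \<longleftrightarrow> M0 m j i \<noteq> 0)" using sym[OF h] h by (simp add: M0_def)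
    have a3: "M0 m i j * M0 m j i \<noteq> 0 \<longrightarrow>
           M0 m i j * M0 m j i \<ge> 4 \<or> (\<exists>k::nat. k \<ge> 3 \<and> M0 m i j * M0 m j i = 4 * (cos (pi / k))\<^sup>2)"
    proof (cases "k = 2")
      case True then show ?thesis using prod[OF h] enat by simp
    next
      case False
      then have "k \<ge> 3" using k2 by simp
      then show ?thesis using prod[OF h] enat by auto
    qed
    show ?thesis using a1 a2 a3 by blast
  next
    case infinity
    then show ?thesis using prod[OF h] sym[OF h] h by (simp add: M0_def)
  qed
  have eg: "egcm n (M0 m)"
    unfolding egcm_def using pair by (simp add: M0_def)
  have pair2: "(m i j = \<infinity> \<longleftrightarrow> M0 m i j * M0 m j i \<ge> 4) \<and>
        (\<forall>k::nat. m i j = enat k \<longrightarrow> k \<ge> 2 \<and> M0 m i j * M0 m j i = 4 * (cos (pi / k))\<^sup>2)"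
    if h: "i < n" "j < n" "i \<noteq> j" for i j
  proof (cases "m i j")
    case (enat k)
    then have k2: "k \<ge> 2" using ge2[OF h] by simp
    have "(cos (pi / k))\<^sup>2 < 1" using cos_nonneg_k[OF k2] cos_lt1_k[OF k2]
      by (simp add: abs_square_less_1)
    then show ?thesis using prod[OF h] enat k2 by simp
  next
    case infinity then show ?thesis using prod[OF h] by simp
  qed
  have as: "egcm_assoc n (M0 m) m"
    unfolding egcm_assoc_def using pair2 by blast
  show ?thesis using eg as by simp
qed

theorem corollary4p1:
  fixes n :: nat and m :: "nat \<Rightarrow> nat \<Rightarrow> enat"
  assumes "coxeter_matrix n m" and "coxeter_irreducible n m"
  shows "(finite (coxeter_group n m) \<longleftrightarrow>
            (\<exists>M. egcm n M \<and> egcm_assoc n M m \<and> admissible n M))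
       \<and> (finite (coxeter_group n m) \<longleftrightarrow>
            (\<forall>M. egcm n M \<and> egcm_assoc n M m \<longrightarrow> admissible n M))"
proof -
  have key: "finite (coxeter_group n m) \<longleftrightarrow> admissible n M" if "egcm n M" "egcm_assoc n M m" for M
  proof -
    interpret egc n M m using that assms(1) by unfold_locales
    show ?thesis using main[OF assms(2)] .
  qed
  have M0: "egcm n (M0 m)" "egcm_assoc n (M0 m) m" using M0_good[OF assms(1)] by auto
  show ?thesis using key M0 by blast
qed


end
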